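(* Let $T$ be large, let $P \le \sqrt{T}$ be large, and let $1/\log T < \epsilon < 1/10$. Then uniformly for all $\frac{1}{2} - \frac{1}{\log T} \le \sigma \le \frac{1}{2} + \frac{1}{\log T}$, $$ \int_{T}^{2T} \Big|\sum_{n \le \sqrt{t/2\pi}} \frac{1}{n^{\sigma + it}} - \sum_{\substack{m \le T^{\epsilon}, \\ m \text{ is } P\text{-smooth}}} \frac{1}{m^{1/2+it}} \sum_{\substack{n \le T^{1/2 - 2\epsilon}, \\ n \text{ is } P\text{-rough}}} \frac{1}{n^{\sigma+it}} \Big|^2 dt \ll T \log T \big( e^{-\epsilon (\log T)/\log P} + \epsilon \big) . $$
   Context: A positive integer is $P$-smooth if all its prime factors are $\le P$, and $P$-rough if all its prime factors are $> P$ (so $1$ is both). *)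

theory Defs
  imports "HOL-Analysis.Analysis" "HOL-Computational_Algebra.Primes"
begin

definition smooth :: "real \<Rightarrow> nat \<Rightarrow> bool" where
  "smooth P n \<longleftrightarrow> n > 0 \<and> (\<forall>p\<in>prime_factors n. real p \<le> P)"

definition rough :: "real \<Rightarrow> nat \<Rightarrow> bool" where
  "rough P n \<longleftrightarrow> n > 0 \<and> (\<forall>p\<in>prime_factors n. real p > P)"

end

theory Submission
  imports Defs "HOL-Analysis.Harmonic_Numbers"
begin



lemma int_cos_interval:
  fixes c d w :: real
  assumes "c \<le> d"
  shows "((\<lambda>t. cos (w*t)) has_integral (if w = 0 then d - c else (sin (w*d) - sin (w*c))/w)) {c..d}"
proof (cases "w = 0")
  case True then show ?thesis using assms has_integral_const_real[of "1::real" c d] by (simp add: True)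
next
  case False
  have "((\<lambda>t. cos (w*t)) has_integral ((\<lambda>t. sin (w*t)/w) d - (\<lambda>t. sin (w*t)/w) c)) {c..d}"
    apply (rule fundamental_theorem_of_calculus[OF assms])
    using False by (auto intro!: derivative_eq_intros simp: has_real_derivative_iff_has_vector_derivative[symmetric])
  then show ?thesis using False by (simp add: diff_divide_distrib)
qed

lemma int_cos_restrict:
  fixes a c d w :: real
  shows "(\<lambda>t. if t \<in> {a..} then cos (w*t) else 0) integrable_on {c..d}"
    and "w \<noteq> 0 \<Longrightarrow> \<bar>integral {c..d} (\<lambda>t. if t \<in> {a..} then cos (w*t) else 0)\<bar> \<le> 2 / \<bar>w\<bar>"
proof -
  have eq: "{a..} \<inter> {c..d} = {max a c..d}" by auto
  show "(\<lambda>t. if t \<in> {a..} then cos (w*t) else 0) integrable_on {c..d}"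
    unfolding integrable_restrict_Int eq
    by (intro integrable_continuous_interval continuous_intros)
  assume w: "w \<noteq> 0"
  have "integral {c..d} (\<lambda>t. if t \<in> {a..} then cos (w*t) else 0) = integral {max a c..d} (\<lambda>t. cos (w*t))"
    unfolding integral_restrict_Int eq ..
  also have "\<bar>\<dots>\<bar> \<le> 2 / \<bar>w\<bar>"
  proof (cases "max a c \<le> d")
    case True
    have "integral {max a c..d} (\<lambda>t. cos (w*t)) = (sin (w*d) - sin (w*max a c))/w"
      using int_cos_interval[OF True, of w] w by (simp add: integral_unique)
    also have "\<bar>\<dots>\<bar> \<le> 2 / \<bar>w\<bar>"
    proof -
      have "\<bar>sin (w*d) - sin (w*max a c)\<bar> \<le> 2"
        using abs_sin_le_one[of "w*d"] abs_sin_le_one[of "w*max a c"] by linarith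
      then show ?thesis by (simp add: abs_divide divide_right_mono)
    qed
    finally show ?thesis .
  next
    case False then show ?thesis by simp
  qed
  finally show "\<bar>integral {c..d} (\<lambda>t. if t \<in> {a..} then cos (w*t) else 0)\<bar> \<le> 2 / \<bar>w\<bar>" .
qed




lemma cos_int_bound:
  fixes c d w :: real
  assumes "w \<noteq> 0" "c \<le> d"
  shows "\<bar>integral {c..d} (\<lambda>t. cos (w*t))\<bar> \<le> 2 / \<bar>w\<bar>"
proof -
  have "integral {c..d} (\<lambda>t. cos (w*t)) = (sin (w*d) - sin (w*c))/w"
    using int_cos_interval[OF assms(2), of w] assms by (simp add: integral_unique)
  also have "\<bar>\<dots>\<bar> \<le> 2 / \<bar>w\<bar>"
  proof -
    have "\<bar>sin (w*d) - sin (w*c)\<bar> \<le> 2"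
      using abs_sin_le_one[of "w*d"] abs_sin_le_one[of "w*c"] by linarith
    then show ?thesis by (simp add: abs_divide divide_right_mono)
  qed
  finally show ?thesis .
qed

lemma step_prod:
  fixes x1 y1 a1 x2 y2 a2 w c d :: real
  defines "h \<equiv> \<lambda>t. (x1 + (if t\<in>{a1..} then y1 else 0)) * (x2 + (if t\<in>{a2..} then y2 else 0)) * cos(w*t)"
  shows "h integrable_on {c..d}"
    and "w \<noteq> 0 \<Longrightarrow> c \<le> d \<Longrightarrow> \<bar>integral {c..d} h\<bar> \<le> 2*(\<bar>x1\<bar>+\<bar>y1\<bar>)*(\<bar>x2\<bar>+\<bar>y2\<bar>)/\<bar>w\<bar>"
proof -
  define f where "f = (\<lambda>a t. if t \<in> {a..} then cos (w*t) else (0::real))"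
  have heq: "h = (\<lambda>t. x1*x2*cos(w*t) + x1*y2*f a2 t + y1*x2*f a1 t + y1*y2*f (max a1 a2) t)"
    by (auto simp: h_def f_def fun_eq_iff algebra_simps)
  have fi: "f a integrable_on {c..d}" for a
    unfolding f_def by (rule int_cos_restrict(1))
  have ci: "(\<lambda>t. cos (w*t)) integrable_on {c..d}"
    by (intro integrable_continuous_interval continuous_intros)
  have i1: "(\<lambda>t. x1*x2*cos(w*t)) integrable_on {c..d}" using integrable_on_cmult_left[OF ci] by simp
  have i2: "(\<lambda>t. C * f a t) integrable_on {c..d}" for C a using integrable_on_cmult_left[OF fi] by simp
  show "h integrable_on {c..d}"
    unfolding heq by (intro integrable_add i1 i2)
  assume w: "w \<noteq> 0" and cd: "c \<le> d"
  have fb: "\<bar>integral {c..d} (f a)\<bar> \<le> 2/\<bar>w\<bar>" for a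
    unfolding f_def using int_cos_restrict(2)[OF w] .
  have "integral {c..d} h = x1*x2*integral {c..d} (\<lambda>t. cos(w*t)) + x1*y2*integral {c..d} (f a2)
      + y1*x2*integral {c..d} (f a1) + y1*y2*integral {c..d} (f (max a1 a2))"
    unfolding heq
    by (simp add: integral_add integrable_add i1 i2 ci fi)
  also have "\<bar>\<dots>\<bar> \<le> \<bar>x1*x2\<bar>*(2/\<bar>w\<bar>) + \<bar>x1*y2\<bar>*(2/\<bar>w\<bar>) + \<bar>y1*x2\<bar>*(2/\<bar>w\<bar>) + \<bar>y1*y2\<bar>*(2/\<bar>w\<bar>)"
  proof -
    have b: "\<bar>C * x\<bar> \<le> \<bar>C\<bar> * (2/\<bar>w\<bar>)" if "\<bar>x\<bar> \<le> 2/\<bar>w\<bar>" for C x :: real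
      using that mult_left_mono[OF that, of "\<bar>C\<bar>"] by (simp add: abs_mult)
    show ?thesis
      by (intro order.trans[OF abs_triangle_ineq] add_mono b fb cos_int_bound w cd order.trans[OF abs_triangle_ineq])
  qed
  also have "\<dots> = 2*(\<bar>x1\<bar>+\<bar>y1\<bar>)*(\<bar>x2\<bar>+\<bar>y2\<bar>)/\<bar>w\<bar>"
    by (simp add: abs_mult add_divide_distrib algebra_simps)
  finally show "\<bar>integral {c..d} h\<bar> \<le> 2*(\<bar>x1\<bar>+\<bar>y1\<bar>)*(\<bar>x2\<bar>+\<bar>y2\<bar>)/\<bar>w\<bar>" .
qed




lemma mv:
  fixes I :: "nat set" and x y a S :: "nat \<Rightarrow> real" and T :: real
  defines "\<beta> \<equiv> \<lambda>k t. x k + (if t \<in> {a k..} then y k else 0)"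
  assumes fin: "finite I" and T: "0 \<le> T" and pos: "\<And>k. k\<in>I \<Longrightarrow> k > 0"
    and Sb: "\<And>k t. k\<in>I \<Longrightarrow> t\<in>{T..2*T} \<Longrightarrow> (\<beta> k t)\<^sup>2 \<le> S k"
  shows "integral {T..2*T} (\<lambda>t. (cmod (\<Sum>k\<in>I. complex_of_real (\<beta> k t) * cis (-(t * ln (real k)))))\<^sup>2)
    \<le> T * (\<Sum>k\<in>I. S k) + (\<Sum>j\<in>I. \<Sum>k\<in>I. if j = k then 0 else
         2*(\<bar>x j\<bar>+\<bar>y j\<bar>)*(\<bar>x k\<bar>+\<bar>y k\<bar>)/\<bar>ln (real k) - ln (real j)\<bar>)"
proof -
  define h where "h = (\<lambda>j k t. \<beta> j t * \<beta> k t * cos ((ln (real k) - ln (real j)) * t))"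
  have sq: "(cmod (\<Sum>k\<in>I. complex_of_real (\<beta> k t) * cis (-(t * ln (real k)))))\<^sup>2 = (\<Sum>j\<in>I. \<Sum>k\<in>I. h j k t)" for t
  proof -
    define z where "z = (\<Sum>k\<in>I. complex_of_real (\<beta> k t) * cis (-(t * ln (real k))))"
    have "(cmod z)\<^sup>2 = Re (z * cnj z)"
      by (metis Re_complex_of_real complex_norm_square)
    also have "z * cnj z = (\<Sum>j\<in>I. \<Sum>k\<in>I. (complex_of_real (\<beta> j t) * cis (-(t * ln (real j)))) * cnj (complex_of_real (\<beta> k t) * cis (-(t * ln (real k)))))"
      unfolding z_def cnj_sum by (rule sum_product)
    also have "Re \<dots> = (\<Sum>j\<in>I. \<Sum>k\<in>I. h j k t)"
      unfolding Re_sum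
    proof (intro sum.cong refl)
      fix j k
      have "cnj (cis (-(t * ln (real k)))) = cis (t * ln (real k))" by (simp add: cis_cnj)
      have "(complex_of_real (\<beta> j t) * cis (-(t * ln (real j)))) * cnj (complex_of_real (\<beta> k t) * cis (-(t * ln (real k))))
          = complex_of_real (\<beta> j t * \<beta> k t) * cis ((ln (real k) - ln (real j)) * t)"
        by (simp add: cis_cnj cis_mult algebra_simps)
      note eq = this
      show "Re ((complex_of_real (\<beta> j t) * cis (-(t * ln (real j)))) * cnj (complex_of_real (\<beta> k t) * cis (-(t * ln (real k))))) = h j k t"
        unfolding eq h_def by simp
    qed
    finally show ?thesis by (simp add: z_def)
  qed
  have hint: "h j k integrable_on {T..2*T}" for j k
    unfolding h_def \<beta>_def by (rule step_prod(1))
  have int_eq: "integral {T..2*T} (\<lambda>t. (cmod (\<Sum>k\<in>I. complex_of_real (\<beta> k t) * cis (-(t * ln (real k)))))\<^sup>2)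
      = (\<Sum>j\<in>I. \<Sum>k\<in>I. integral {T..2*T} (h j k))"
    unfolding sq
    by (simp add: integral_sum fin hint integrable_sum)
  define B where "B = (\<lambda>j k. 2*(\<bar>x j\<bar>+\<bar>y j\<bar>)*(\<bar>x k\<bar>+\<bar>y k\<bar>)/\<bar>ln (real k) - ln (real j)\<bar>)"
  have each: "integral {T..2*T} (h j k) \<le> (if j = k then T * S j else 0) + (if j = k then 0 else B j k)"
    if jk: "j \<in> I" "k \<in> I" for j k
  proof (cases "j = k")
    case True
    have "integral {T..2*T} (h j k) \<le> integral {T..2*T} (\<lambda>_. S j)"
    proof (rule integral_le[OF hint])
      show "(\<lambda>_. S j) integrable_on {T..2*T}" by (rule integrable_const_ivl)
      fix t assume "t \<in> {T..2*T}"
      then show "h j k t \<le> S j" using Sb[OF jk(1)] True by (simp add: h_def power2_eq_square)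
    qed
    also have "\<dots> = T * S j" using T by simp
    finally show ?thesis using True by simp
  next
    case False
    have jk0: "j > 0" "k > 0" using pos jk by auto
    have "ln (real k) \<noteq> ln (real j)" using False jk0 by simp
    then have "ln (real k) - ln (real j) \<noteq> 0" by simp
    then have "\<bar>integral {T..2*T} (h j k)\<bar> \<le> B j k"
      unfolding h_def \<beta>_def B_def using T by (intro step_prod(2)) auto
    then show ?thesis using False by simp
  qed
  have "(\<Sum>j\<in>I. \<Sum>k\<in>I. integral {T..2*T} (h j k)) \<le> (\<Sum>j\<in>I. \<Sum>k\<in>I. (if j = k then T * S j else 0) + (if j = k then 0 else B j k))"
    by (intro sum_mono each) auto
  also have "\<dots> = T * (\<Sum>k\<in>I. S k) + (\<Sum>j\<in>I. \<Sum>k\<in>I. if j = k then 0 else B j k)"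
    by (simp add: sum.distrib fin sum_distrib_left)
  finally show ?thesis unfolding int_eq B_def .
qed




lemma sum_inv_sqrt: "(\<Sum>j\<in>{1..K}. 1 / sqrt (real j)) \<le> 2 * sqrt (real K)"
proof (induction K)
  case 0 then show ?case by simp
next
  case (Suc K)
  have a: "sqrt (real K) \<le> sqrt (real (Suc K))" by simp
  have p: "sqrt (real (Suc K)) > 0" by simp
  have "1 / sqrt (real (Suc K)) \<le> 2 * (sqrt (real (Suc K)) - sqrt (real K))"
  proof -
    have "(sqrt (real (Suc K)) - sqrt (real K)) * (sqrt (real (Suc K)) + sqrt (real K)) = 1"
      by (simp add: algebra_simps)
    moreover have "sqrt (real (Suc K)) + sqrt (real K) \<le> 2 * sqrt (real (Suc K))" using a by simp
    ultimately have "1 \<le> (sqrt (real (Suc K)) - sqrt (real K)) * (2 * sqrt (real (Suc K)))"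
      by (metis a diff_ge_0_iff_ge mult_left_mono)
    then show ?thesis using p by (simp add: field_simps)
  qed
  then show ?case using Suc by (simp add: algebra_simps)
qed

lemma sum_sqrt: "(\<Sum>j\<in>{1..K}. sqrt (real j)) \<le> real K * sqrt (real K)"
proof -
  have "(\<Sum>j\<in>{1..K}. sqrt (real j)) \<le> (\<Sum>j\<in>{1..K}. sqrt (real K))"
    by (intro sum_mono) auto
  then show ?thesis by simp
qed

lemma ln_gap:
  fixes j k :: nat
  assumes "0 < j" "j < k"
  shows "1 / real k \<le> ln (real k) - ln (real j)"
proof -
  have "ln (real j / real k) \<le> real j / real k - 1" using assms by (intro ln_le_minus_one) auto
  moreover have "real j / real k - 1 \<le> - 1 / real k"
  proof -
    have "real j - real k \<le> -1" using assms by simp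
    then have "(real j - real k) / real k \<le> -1 / real k" using assms by (intro divide_right_mono) auto
    moreover have "(real j - real k) / real k = real j / real k - 1" using assms by (simp add: field_simps)
    ultimately show ?thesis by simp
  qed
  ultimately show ?thesis using assms by (simp add: ln_div)
qed

lemma offdiag_term:
  fixes j k :: nat and wj wk :: real
  assumes "0 < j" "0 < k" "j \<noteq> k" "0 \<le> wj" "wj \<le> 4 / sqrt j" "0 \<le> wk" "wk \<le> 4 / sqrt k"
  shows "2 * wj * wk / \<bar>ln (real k) - ln (real j)\<bar> \<le> 32 * (sqrt j / sqrt k + sqrt k / sqrt j)"
proof -
  define m where "m = max j k"
  have gap: "1 / real m \<le> \<bar>ln (real k) - ln (real j)\<bar>"
  proof (cases "j < k")
    case True then show ?thesis using ln_gap[of j k] assms by (simp add: m_def)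
  next
    case False then have "k < j" using assms by simp
    then show ?thesis using ln_gap[of k j] assms by (simp add: m_def)
  qed
  have mpos: "real m > 0" using assms by (simp add: m_def)
  have gpos: "\<bar>ln (real k) - ln (real j)\<bar> > 0" using gap mpos
    by (metis divide_pos_pos less_le_trans zero_less_one)
  have "2 * wj * wk / \<bar>ln (real k) - ln (real j)\<bar> \<le> 2 * wj * wk * real m"
  proof -
    have "1 / \<bar>ln (real k) - ln (real j)\<bar> \<le> real m" using gap mpos gpos by (simp add: field_simps)
    then have "2 * wj * wk * (1 / \<bar>ln (real k) - ln (real j)\<bar>) \<le> 2 * wj * wk * real m"
      using assms by (intro mult_left_mono) auto
    then show ?thesis by simp
  qed
  also have "\<dots> \<le> 2 * (4 / sqrt j) * (4 / sqrt k) * real m"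
    using assms mpos by (intro mult_right_mono mult_mono) auto
  also have "\<dots> = 32 * (real m / (sqrt j * sqrt k))" by simp
  also have "real m / (sqrt j * sqrt k) \<le> sqrt j / sqrt k + sqrt k / sqrt j"
  proof -
    have sj: "sqrt (real j) > 0" "sqrt (real k) > 0" using assms by auto
    have "real m \<le> real j + real k" by (simp add: m_def)
    also have "\<dots> = sqrt j * sqrt j + sqrt k * sqrt k" by simp
    finally have "real m \<le> sqrt j * sqrt j + sqrt k * sqrt k" .
    then show ?thesis using sj by (simp add: field_simps)
  qed
  finally show ?thesis by simp
qed

lemma offdiag:
  fixes x y :: "nat \<Rightarrow> real" and K :: nat
  assumes w: "\<And>k. k\<in>{1..K} \<Longrightarrow> \<bar>x k\<bar> + \<bar>y k\<bar> \<le> 4 / sqrt k"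
  shows "(\<Sum>j\<in>{1..K}. \<Sum>k\<in>{1..K}. if j = k then 0 else
         2*(\<bar>x j\<bar>+\<bar>y j\<bar>)*(\<bar>x k\<bar>+\<bar>y k\<bar>)/\<bar>ln (real k) - ln (real j)\<bar>) \<le> 128 * (real K)\<^sup>2"
proof -
  have "(\<Sum>j\<in>{1..K}. \<Sum>k\<in>{1..K}. if j = k then 0 else
         2*(\<bar>x j\<bar>+\<bar>y j\<bar>)*(\<bar>x k\<bar>+\<bar>y k\<bar>)/\<bar>ln (real k) - ln (real j)\<bar>)
      \<le> (\<Sum>j\<in>{1..K}. \<Sum>k\<in>{1..K}. 32 * (sqrt j * (1 / sqrt k) + sqrt k * (1 / sqrt j)))"
  proof (intro sum_mono)
    fix j k assume jk: "j \<in> {1..K}" "k \<in> {1..K}"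
    show "(if j = k then 0 else 2*(\<bar>x j\<bar>+\<bar>y j\<bar>)*(\<bar>x k\<bar>+\<bar>y k\<bar>)/\<bar>ln (real k) - ln (real j)\<bar>)
      \<le> 32 * (sqrt j * (1 / sqrt k) + sqrt k * (1 / sqrt j))"
      using offdiag_term[of j k "\<bar>x j\<bar>+\<bar>y j\<bar>" "\<bar>x k\<bar>+\<bar>y k\<bar>"] w[OF jk(1)] w[OF jk(2)] jk
      by auto
  qed
  also have "\<dots> = 64 * ((\<Sum>j\<in>{1..K}. sqrt j) * (\<Sum>k\<in>{1..K}. 1 / sqrt k))"
  proof -
    define a where "a = (\<lambda>j::nat. sqrt (real j))"
    define b where "b = (\<lambda>j::nat. 1 / sqrt (real j))"
    have "(\<Sum>j\<in>{1..K}. \<Sum>k\<in>{1..K}. 32 * (a j * b k + a k * b j))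
        = 32 * (\<Sum>j\<in>{1..K}. \<Sum>k\<in>{1..K}. a j * b k) + 32 * (\<Sum>j\<in>{1..K}. \<Sum>k\<in>{1..K}. a k * b j)"
      by (simp add: sum.distrib sum_distrib_left distrib_left)
    also have "(\<Sum>j\<in>{1..K}. \<Sum>k\<in>{1..K}. a k * b j) = (\<Sum>j\<in>{1..K}. \<Sum>k\<in>{1..K}. a j * b k)"
      by (rule sum.swap)
    also have "(\<Sum>j\<in>{1..K}. \<Sum>k\<in>{1..K}. a j * b k) = (\<Sum>j\<in>{1..K}. a j) * (\<Sum>k\<in>{1..K}. b k)"
      by (rule sum_product[symmetric])
    finally show ?thesis by (simp add: a_def b_def)
  qed
  also have "\<dots> \<le> 64 * ((real K * sqrt K) * (2 * sqrt K))"
    by (intro mult_left_mono mult_mono sum_sqrt sum_inv_sqrt) (auto intro: sum_nonneg)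
  also have "\<dots> = 128 * (real K)\<^sup>2" by (simp add: power2_eq_square)
  finally show ?thesis .
qed




lemma ln_ge_sum_pf:
  fixes k :: nat assumes "k > 0"
  shows "(\<Sum>p\<in>prime_factors k. ln (real p)) \<le> ln (real k)"
proof -
  have "(\<Prod>p\<in>prime_factors k. p) \<le> (\<Prod>p\<in>prime_factors k. p ^ multiplicity p k)"
  proof (intro prod_mono conjI)
    fix p assume p: "p \<in> prime_factors k"
    then have "multiplicity p k > 0" by (auto simp: prime_factors_multiplicity)
    moreover have "p > 0" using p by (auto intro: prime_gt_0_nat)
    ultimately show "p \<le> p ^ multiplicity p k"
      by (metis One_nat_def Suc_leI self_le_power)
  qed simp
  also have "\<dots> = k" using prime_factorization_nat[OF assms] by simp
  finally have le: "(\<Prod>p\<in>prime_factors k. p) \<le> k" .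
  have pos: "\<And>p. p \<in> prime_factors k \<Longrightarrow> real p \<noteq> 0"
    by (auto dest: in_prime_factors_imp_prime simp: prime_gt_0_nat)
  have ppos: "(\<Prod>p\<in>prime_factors k. p) > 0"
    by (rule prod_pos) (meson in_prime_factors_imp_prime prime_gt_0_nat)
  have "(\<Sum>p\<in>prime_factors k. ln (real p)) = ln (\<Prod>p\<in>prime_factors k. real p)"
    by (rule ln_prod[symmetric]) (use pos in blast)+
  also have "\<dots> = ln (real (\<Prod>p\<in>prime_factors k. p))" by simp
  also have "\<dots> \<le> ln (real k)"
  proof -
    have a: "0 < real (\<Prod>p\<in>prime_factors k. p)" using ppos by (simp only: of_nat_0_less_iff)
    have b: "real (\<Prod>p\<in>prime_factors k. p) \<le> real k" using le by (simp only: of_nat_le_iff)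
    show ?thesis using ln_le_cancel_iff[OF a, of "real k"] a b by linarith
  qed
  finally show ?thesis .
qed

lemma card_multiples_ge:
  fixes p n :: nat assumes "p > 0"
  shows "n div p \<le> card {k\<in>{1..n}. p dvd k}"
proof -
  have "(\<lambda>j. p * j) ` {1..n div p} \<subseteq> {k\<in>{1..n}. p dvd k}"
  proof
    fix k assume "k \<in> (\<lambda>j. p * j) ` {1..n div p}"
    then obtain j where j: "j \<in> {1..n div p}" "k = p * j" by auto
    have "p * j \<le> p * (n div p)" using j by simp
    also have "\<dots> \<le> n" by simp
    finally show "k \<in> {k\<in>{1..n}. p dvd k}" using j assms by auto
  qed
  then have "card ((\<lambda>j. p * j) ` {1..n div p}) \<le> card {k\<in>{1..n}. p dvd k}"
    by (intro card_mono) auto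
  moreover have "card ((\<lambda>j. p * j) ` {1..n div p}) = n div p"
    using assms by (subst card_image) (auto simp: inj_on_def)
  ultimately show ?thesis by simp
qed

lemma mertens_weak:
  fixes n :: nat assumes n: "n \<ge> 1"
  shows "(\<Sum>p\<in>{p. prime p \<and> p \<le> n}. ln (real p) / real p) \<le> 2 * ln (real n)"
proof -
  define Pn where "Pn = {p. prime p \<and> p \<le> n}"
  have finP: "finite Pn" unfolding Pn_def by (rule finite_subset[of _ "{..n}"]) auto
  have pf: "prime_factors k = {p\<in>Pn. p dvd k}" if "k \<in> {1..n}" for k
    using that unfolding Pn_def by (auto simp: prime_factors_dvd dest: dvd_imp_le)
  have "(\<Sum>p\<in>Pn. ln (real p) * (real n / (2 * real p))) \<le> (\<Sum>p\<in>Pn. ln (real p) * real (card {k\<in>{1..n}. p dvd k}))"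
  proof (intro sum_mono mult_left_mono)
    fix p assume p: "p \<in> Pn"
    then have p1: "p \<ge> 2" "p \<le> n" unfolding Pn_def by (auto simp: prime_ge_2_nat)
    have d1: "n div p \<ge> 1" using p1 by (simp add: Suc_le_eq div_greater_zero_iff)
    have d2: "real (n div p) \<ge> real n / real p - 1"
    proof -
      have "real n = real (n div p) * real p + real (n mod p)"
        by (metis of_nat_add of_nat_mult div_mult_mod_eq)
      moreover have "real (n mod p) < real p" using p1 by simp
      ultimately have "real n < (real (n div p) + 1) * real p" by (simp add: algebra_simps)
      then show ?thesis using p1 by (simp add: field_simps)
    qed
    have "real n / (2 * real p) \<le> real (n div p)" using d1 d2 by (simp add: field_simps)
    also have "\<dots> \<le> real (card {k\<in>{1..n}. p dvd k})" using card_multiples_ge[of p n] p1 by simp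
    finally show "real n / (2 * real p) \<le> real (card {k\<in>{1..n}. p dvd k})" .
    show "0 \<le> ln (real p)" using p1 by simp
  qed
  also have "\<dots> = (\<Sum>p\<in>Pn. \<Sum>k\<in>{1..n}. if p dvd k then ln (real p) else 0)"
  proof (intro sum.cong refl)
    fix p
    have "(\<Sum>k\<in>{1..n}. if p dvd k then ln (real p) else 0) = (\<Sum>k\<in>{k\<in>{1..n}. p dvd k}. ln (real p))"
      by (rule sum.inter_filter[symmetric]) simp
    then show "ln (real p) * real (card {k\<in>{1..n}. p dvd k}) = (\<Sum>k\<in>{1..n}. if p dvd k then ln (real p) else 0)"
      by simp
  qed
  also have "\<dots> = (\<Sum>k\<in>{1..n}. \<Sum>p\<in>Pn. if p dvd k then ln (real p) else 0)"
    by (rule sum.swap)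
  also have "\<dots> = (\<Sum>k\<in>{1..n}. \<Sum>p\<in>prime_factors k. ln (real p))"
  proof (rule sum.cong[OF refl])
    fix k assume k: "k \<in> {1..n}"
    have "(\<Sum>p\<in>Pn. if p dvd k then ln (real p) else 0) = (\<Sum>p\<in>{p\<in>Pn. p dvd k}. ln (real p))"
      using finP by (simp add: sum.inter_filter)
    then show "(\<Sum>p\<in>Pn. if p dvd k then ln (real p) else 0) = (\<Sum>p\<in>prime_factors k. ln (real p))"
      using pf[OF k] by simp
  qed
  also have "\<dots> \<le> (\<Sum>k\<in>{1..n}. ln (real n))"
    by (intro sum_mono order.trans[OF ln_ge_sum_pf]) auto
  also have "\<dots> = real n * ln (real n)" by simp
  finally have main: "(\<Sum>p\<in>Pn. ln (real p) * (real n / (2 * real p))) \<le> real n * ln (real n)" .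
  have "(\<Sum>p\<in>Pn. ln (real p) * (real n / (2 * real p))) = (real n / 2) * (\<Sum>p\<in>Pn. ln (real p) / real p)"
    by (simp add: sum_distrib_left field_simps)
  with main have "(real n / 2) * (\<Sum>p\<in>Pn. ln (real p) / real p) \<le> (real n / 2) * (2 * ln (real n))" by simp
  then show ?thesis using n unfolding Pn_def[symmetric] by (simp add: mult_le_cancel_left_pos)
qed

lemma le_nat_floor_iff:
  fixes P :: real assumes "P \<ge> 0"
  shows "x \<le> nat \<lfloor>P\<rfloor> \<longleftrightarrow> real x \<le> P"
  using assms by (simp add: le_nat_iff le_floor_iff)

lemma mertens_weak_real:
  fixes P :: real assumes P: "P \<ge> 2"
  shows "(\<Sum>p\<in>{p. prime p \<and> real p \<le> P}. ln (real p) / real p) \<le> 2 * ln P"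
proof -
  define n where "n = nat \<lfloor>P\<rfloor>"
  have eq: "{p. prime p \<and> real p \<le> P} = {p. prime p \<and> p \<le> n}"
    unfolding n_def using P le_nat_floor_iff[of P] by auto
  have n1: "n \<ge> 1" unfolding n_def using P by linarith
  have "real n \<le> P" unfolding n_def using P by linarith
  then have "ln (real n) \<le> ln P" using n1 by simp
  then show ?thesis unfolding eq using mertens_weak[OF n1] by linarith
qed




definition sQ :: "nat set \<Rightarrow> nat \<Rightarrow> nat" where
  "sQ Q k = (\<Prod>p\<in>Q. p ^ multiplicity p k)"

lemma sQ_empty [simp]: "sQ {} k = 1" by (simp add: sQ_def)

lemma sQ_insert: "finite Q \<Longrightarrow> q \<notin> Q \<Longrightarrow> sQ (insert q Q) k = q ^ multiplicity q k * sQ Q k"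
  by (simp add: sQ_def)

lemma sQ_pos: "(\<forall>p\<in>Q. prime p) \<Longrightarrow> sQ Q k > 0"
  unfolding sQ_def by (rule prod_pos) (auto simp: prime_gt_0_nat)

lemma sQ_mult:
  assumes "\<forall>p\<in>Q. prime p" "prime q" "q \<notin> Q" "j > 0"
  shows "sQ Q (q^b * j) = sQ Q j"
  unfolding sQ_def
proof (rule prod.cong[OF refl])
  fix p assume p: "p \<in> Q"
  then have "prime p" "p \<noteq> q" using assms by auto
  then have "multiplicity p (q^b * j) = multiplicity p (q^b) + multiplicity p j"
    using assms by (intro prime_elem_multiplicity_mult_distrib) (auto simp: prime_gt_0_nat)
  also have "multiplicity p (q^b) = 0"
    using \<open>prime p\<close> \<open>p \<noteq> q\<close> assms by (intro multiplicity_distinct_prime_power) auto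
  finally show "p ^ multiplicity p (q ^ b * j) = p ^ multiplicity p j" by simp
qed

lemma telescope_pow:
  fixes r :: real
  shows "r ^ v = 1 + (\<Sum>b\<in>{1..v}. r ^ b - r ^ (b - 1))"
  by (induction v) (simp_all add: algebra_simps)

lemma multiples_reindex:
  fixes d n :: nat assumes "d > 0"
  shows "{k\<in>{1..n}. d dvd k} = (\<lambda>j. d * j) ` {1..n div d}"
proof
  show "(\<lambda>j. d * j) ` {1..n div d} \<subseteq> {k\<in>{1..n}. d dvd k}"
  proof
    fix k assume "k \<in> (\<lambda>j. d * j) ` {1..n div d}"
    then obtain j where j: "j \<in> {1..n div d}" "k = d * j" by auto
    have "d * j \<le> d * (n div d)" using j by simp
    also have "\<dots> \<le> n" by simp
    finally show "k \<in> {k\<in>{1..n}. d dvd k}" using j assms by auto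
  qed
  show "{k\<in>{1..n}. d dvd k} \<subseteq> (\<lambda>j. d * j) ` {1..n div d}"
  proof
    fix k assume k: "k \<in> {k\<in>{1..n}. d dvd k}"
    then obtain j where j: "k = d * j" by auto
    have "j \<ge> 1" using k j by (cases j) auto
    moreover have "j \<le> n div d" using k j assms
      by (metis (no_types, lifting) atLeastAtMost_iff div_le_mono mem_Collect_eq nonzero_mult_div_cancel_left not_gr0)
    ultimately show "k \<in> (\<lambda>j. d * j) ` {1..n div d}" using j by auto
  qed
qed

lemma sum_multiples:
  fixes d n :: nat and F :: "nat \<Rightarrow> real" assumes "d > 0"
  shows "(\<Sum>k\<in>{k\<in>{1..n}. d dvd k}. F k / real k) = (\<Sum>j\<in>{1..n div d}. F (d * j) / real j) / real d"
proof -
  have "(\<Sum>k\<in>{k\<in>{1..n}. d dvd k}. F k / real k) = (\<Sum>j\<in>{1..n div d}. F (d * j) / real (d * j))"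
    unfolding multiples_reindex[OF assms] using assms
    by (subst sum.reindex) (auto simp: inj_on_def)
  also have "\<dots> = (\<Sum>j\<in>{1..n div d}. F (d * j) / real j) / real d"
    by (simp add: sum_divide_distrib field_simps)
  finally show ?thesis .
qed

lemma geom_bound:
  fixes r q :: real and n :: nat
  assumes "1 \<le> r" "r < q"
  shows "(\<Sum>b\<in>{1..n}. (r ^ b - r ^ (b - 1)) / q ^ b) \<le> (r - 1) / (q - r)"
proof -
  have q0: "q > 0" using assms by simp
  have "(\<Sum>b\<in>{1..n}. (r ^ b - r ^ (b - 1)) / q ^ b) = (\<Sum>i<n. ((r - 1) / q) * (r / q) ^ i)"
  proof -
    have "(\<Sum>b\<in>{1..n}. (r ^ b - r ^ (b - 1)) / q ^ b) = (\<Sum>i<n. (r ^ Suc i - r ^ i) / q ^ Suc i)"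
      by (rule sum.reindex_bij_witness[where i = Suc and j = "\<lambda>b. b - 1"]) auto
    also have "\<dots> = (\<Sum>i<n. ((r - 1) / q) * (r / q) ^ i)"
      using q0 by (intro sum.cong refl) (simp add: power_divide field_simps)
    finally show ?thesis .
  qed
  also have "\<dots> = ((r - 1) / q) * (\<Sum>i<n. (r / q) ^ i)" by (simp add: sum_distrib_left)
  also have "(\<Sum>i<n. (r / q) ^ i) \<le> 1 / (1 - r / q)"
  proof -
    have rq: "r / q < 1" "0 \<le> r / q" using assms q0 by auto
    have "(\<Sum>i<n. (r / q) ^ i) = (1 - (r/q)^n) / (1 - r / q)"
      using rq by (subst sum_gp_strict) auto
    also have "\<dots> \<le> 1 / (1 - r / q)"
      using rq by (intro divide_right_mono) auto
    finally show ?thesis .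
  qed
  then have "((r - 1) / q) * (\<Sum>i<n. (r / q) ^ i) \<le> ((r - 1) / q) * (1 / (1 - r / q))"
    using assms q0 by (intro mult_left_mono) auto
  also have "\<dots> = (r - 1) / (q - r)" using assms q0 by (simp add: field_simps)
  finally show ?thesis .
qed




lemma pow_powr_swap:
  fixes x :: real assumes "x > 0"
  shows "(x ^ v) powr d = (x powr d) ^ v"
proof -
  have "(x ^ v) powr d = (x powr real v) powr d" using assms by (simp add: powr_realpow)
  also have "\<dots> = x powr (real v * d)" by (simp add: powr_powr)
  also have "\<dots> = (x powr d) ^ v" using assms by (simp add: powr_power)
  finally show ?thesis .
qed

lemma rankin_sum:
  fixes d :: real and Q :: "nat set"
  assumes "finite Q" "\<forall>p\<in>Q. prime p" "0 \<le> d" "d < 1"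
  shows "(\<Sum>k\<in>{1..n}. real (sQ Q k) powr d / real k)
    \<le> (\<Prod>p\<in>Q. 1 + (real p powr d - 1)/(real p - real p powr d)) * harm n"
  using assms
proof (induction Q arbitrary: n rule: finite_induct)
  case empty
  then show ?case by (simp add: harm_def divide_inverse)
next
  case (insert q Q)
  define F where "F = (\<lambda>k. real (sQ Q k) powr d)"
  define r where "r = real q powr d"
  define W where "W = (\<Prod>p\<in>Q. 1 + (real p powr d - 1)/(real p - real p powr d))"
  have primeQ: "\<forall>p\<in>Q. prime p" and q: "prime q" using insert.prems by auto
  have q2: "real q \<ge> 2" using q prime_ge_2_nat by (simp add: of_nat_le_iff[symmetric, of 2])
  have r1: "1 \<le> r" unfolding r_def using q2 insert.prems by (intro ge_one_powr_ge_zero) auto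
  have rq: "r < real q" unfolding r_def using q2 insert.prems powr_less_mono[of d 1 "real q"] by simp
  have fac_ge: "1 \<le> 1 + (real p powr d - 1)/(real p - real p powr d)" if "prime p" for p
  proof -
    have p2: "real p \<ge> 2" using that prime_ge_2_nat by (simp add: of_nat_le_iff[symmetric, of 2])
    have "1 \<le> real p powr d" using p2 insert.prems by (intro ge_one_powr_ge_zero) auto
    moreover have "real p powr d < real p" using p2 insert.prems powr_less_mono[of d 1 "real p"] by simp
    ultimately show ?thesis by simp
  qed
  have W0: "W \<ge> 0" unfolding W_def using fac_ge primeQ
    by (intro prod_nonneg) (meson order_trans zero_le_one)
  have IH: "\<And>m. (\<Sum>k\<in>{1..m}. F k / real k) \<le> W * harm m"
    using insert.IH primeQ insert.prems unfolding F_def W_def by blast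
  have step1: "real (sQ (insert q Q) k) powr d / real k
      = F k / real k + (\<Sum>b\<in>{1..n}. if q^b dvd k then (r^b - r^(b-1)) * (F k / real k) else 0)"
    if k: "k \<in> {1..n}" for k
  proof -
    define v where "v = multiplicity q k"
    have "q ^ v dvd k" unfolding v_def by (simp add: multiplicity_dvd)
    then have "q ^ v \<le> k" using k by (intro dvd_imp_le) auto
    moreover have "v < q ^ v"
    proof -
      have "v < 2 ^ v" by (rule less_exp)
      also have "2 ^ v \<le> q ^ v" using prime_ge_2_nat[OF q] by (rule power_mono) simp
      finally show ?thesis .
    qed
    ultimately have vn: "v \<le> n" using k by auto
    have "real (sQ (insert q Q) k) powr d = (real q ^ v * real (sQ Q k)) powr d"
      using sQ_insert[OF insert.hyps] by (simp add: v_def)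
    also have "\<dots> = r ^ v * F k"
      using q2 by (simp add: powr_mult pow_powr_swap r_def F_def)
    finally have e1: "real (sQ (insert q Q) k) powr d = r ^ v * F k" .
    have "r ^ v = 1 + (\<Sum>b\<in>{1..v}. r ^ b - r ^ (b - 1))" by (rule telescope_pow)
    also have "(\<Sum>b\<in>{1..v}. r ^ b - r ^ (b - 1)) = (\<Sum>b\<in>{b\<in>{1..n}. b \<le> v}. r ^ b - r ^ (b - 1))"
      using vn by (intro sum.cong) auto
    also have "\<dots> = (\<Sum>b\<in>{1..n}. if b \<le> v then r ^ b - r ^ (b - 1) else 0)"
      by (rule sum.inter_filter) simp
    also have "\<dots> = (\<Sum>b\<in>{1..n}. if q^b dvd k then r ^ b - r ^ (b - 1) else 0)"
    proof (rule sum.cong[OF refl])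
      fix b
      have "(q^b dvd k) = (b \<le> v)" unfolding v_def using k q by (intro power_dvd_iff_le_multiplicity) (auto dest: not_prime_unit)
      then show "(if b \<le> v then r ^ b - r ^ (b - 1) else 0) = (if q^b dvd k then r ^ b - r ^ (b - 1) else 0)"
        by simp
    qed
    finally have e2: "r ^ v = 1 + (\<Sum>b\<in>{1..n}. if q^b dvd k then r ^ b - r ^ (b - 1) else 0)" .
    have e3: "(\<Sum>b\<in>{1..n}. if q^b dvd k then r ^ b - r ^ (b - 1) else 0) * (F k / real k)
        = (\<Sum>b\<in>{1..n}. if q^b dvd k then (r^b - r^(b-1)) * (F k / real k) else 0)"
      unfolding sum_distrib_right by (intro sum.cong refl) simp
    show ?thesis unfolding e1 e2 using e3 by (simp add: add_divide_distrib distrib_right)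
  qed
  have "(\<Sum>k\<in>{1..n}. real (sQ (insert q Q) k) powr d / real k)
      = (\<Sum>k\<in>{1..n}. F k / real k) + (\<Sum>k\<in>{1..n}. \<Sum>b\<in>{1..n}. if q^b dvd k then (r^b - r^(b-1)) * (F k / real k) else 0)"
    by (simp add: step1 sum.distrib)
  also have "(\<Sum>k\<in>{1..n}. \<Sum>b\<in>{1..n}. if q^b dvd k then (r^b - r^(b-1)) * (F k / real k) else 0)
      = (\<Sum>b\<in>{1..n}. (r^b - r^(b-1)) * (\<Sum>k\<in>{k\<in>{1..n}. q^b dvd k}. F k / real k))"
  proof (subst sum.swap, rule sum.cong[OF refl])
    fix b
    have "(\<Sum>k\<in>{1..n}. if q^b dvd k then (r^b - r^(b-1)) * (F k / real k) else 0)
        = (\<Sum>k\<in>{k\<in>{1..n}. q^b dvd k}. (r^b - r^(b-1)) * (F k / real k))"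
      by (rule sum.inter_filter[symmetric]) simp
    then show "(\<Sum>k\<in>{1..n}. if q^b dvd k then (r^b - r^(b-1)) * (F k / real k) else 0)
        = (r^b - r^(b-1)) * (\<Sum>k\<in>{k\<in>{1..n}. q^b dvd k}. F k / real k)"
      by (simp add: sum_distrib_left)
  qed
  also have "\<dots> \<le> (\<Sum>b\<in>{1..n}. (r^b - r^(b-1)) * (W * harm n / real q ^ b))"
  proof (intro sum_mono mult_left_mono)
    fix b assume b: "b \<in> {1..n}"
    have qb: "q ^ b > 0" using q by (simp add: prime_gt_0_nat)
    have "(\<Sum>k\<in>{k\<in>{1..n}. q^b dvd k}. F k / real k) = (\<Sum>j\<in>{1..n div q^b}. F (q^b * j) / real j) / real (q^b)"
      by (rule sum_multiples[OF qb])
    also have "(\<Sum>j\<in>{1..n div q^b}. F (q^b * j) / real j) = (\<Sum>j\<in>{1..n div q^b}. F j / real j)"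
      using sQ_mult[OF primeQ q insert.hyps(2)] by (intro sum.cong refl) (auto simp: F_def)
    also have "\<dots> \<le> W * harm (n div q^b)" by (rule IH)
    also have "\<dots> \<le> W * harm n" using W0 by (intro mult_left_mono harm_mono) auto
    finally show "(\<Sum>k\<in>{k\<in>{1..n}. q^b dvd k}. F k / real k) \<le> W * harm n / real q ^ b"
      using qb by (simp add: divide_right_mono)
    have "r ^ (b - 1) \<le> r ^ b" using r1 b by (intro power_increasing) auto
    then show "0 \<le> r ^ b - r ^ (b - 1)" by simp
  qed
  also have "\<dots> = W * harm n * (\<Sum>b\<in>{1..n}. (r^b - r^(b-1)) / real q ^ b)"
    by (simp add: sum_distrib_left field_simps)
  also have "\<dots> \<le> W * harm n * ((r - 1) / (real q - r))"
    using W0 harm_nonneg[of n] by (intro mult_left_mono geom_bound r1 rq) (auto intro: mult_nonneg_nonneg)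
  finally have "(\<Sum>k\<in>{1..n}. real (sQ (insert q Q) k) powr d / real k)
      \<le> (\<Sum>k\<in>{1..n}. F k / real k) + W * harm n * ((r - 1) / (real q - r))" by simp
  also have "\<dots> \<le> W * harm n + W * harm n * ((r - 1) / (real q - r))"
    using IH by simp
  also have "\<dots> = (1 + (r - 1) / (real q - r)) * W * harm n" by (simp add: algebra_simps)
  also have "(1 + (r - 1) / (real q - r)) * W = (\<Prod>p\<in>insert q Q. 1 + (real p powr d - 1)/(real p - real p powr d))"
    using insert.hyps by (simp add: W_def r_def)
  finally show ?case .
qed




lemma exp_minus_one_le:
  fixes y :: real assumes "0 \<le> y" "y \<le> 1"
  shows "exp y - 1 \<le> 3 * y"
proof -
  have "1 - y \<le> exp (-y)" using exp_ge_add_one_self[of "-y"] by simp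
  then have "exp y * (1 - y) \<le> exp y * exp (-y)" by (intro mult_left_mono) auto
  then have "exp y - 1 \<le> y * exp y" by (simp add: exp_minus field_simps)
  also have "exp y \<le> exp 1" using assms by simp
  also have "exp (1::real) \<le> 3" using e_less_272 by simp
  finally show ?thesis using assms by (simp add: mult_left_mono)
qed

lemma w_bound:
  fixes p :: nat and P :: real
  assumes p: "prime p" "real p \<le> P" and P: "ln P \<ge> 2"
  shows "(real p powr (1/ln P) - 1)/(real p - real p powr (1/ln P)) \<le> 12 * (ln (real p) / real p) / ln P"
proof -
  have p2: "real p \<ge> 2" using p prime_ge_2_nat by (simp add: of_nat_le_iff[symmetric, of 2])
  have lP: "ln P > 0" using P by simp
  define y where "y = ln (real p) / ln P"
  have y0: "0 \<le> y" using p2 lP by (simp add: y_def)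
  have y1: "y \<le> 1" using p2 lP p(2) by (simp add: y_def)
  have eq: "real p powr (1/ln P) = exp y" using p2 by (simp add: powr_def y_def)
  have num: "real p powr (1/ln P) - 1 \<le> 3 * y" unfolding eq by (rule exp_minus_one_le[OF y0 y1])
  have "real p powr (1/ln P) \<le> real p powr (1/2)"
    using p2 lP P by (intro powr_mono) (auto simp: field_simps)
  also have "\<dots> = sqrt (real p)" using p2 by (simp add: powr_half_sqrt)
  also have "sqrt (real p) \<le> 3/4 * real p"
  proof -
    have s: "sqrt (real p) \<ge> 4/3"
    proof -
      have "sqrt (16/9) \<le> sqrt (real p)" using p2 by (intro real_sqrt_le_mono) auto
      moreover have "sqrt (16/9::real) = 4/3" by (simp add: real_sqrt_divide)
      ultimately show ?thesis by simp
    qed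
    have "sqrt (real p) * 1 \<le> sqrt (real p) * (3/4 * sqrt (real p))"
      using s by (intro mult_left_mono) auto
    also have "\<dots> = 3/4 * (sqrt (real p) * sqrt (real p))" by simp
    also have "sqrt (real p) * sqrt (real p) = real p" by simp
    finally show ?thesis by simp
  qed
  finally have den: "real p / 4 \<le> real p - real p powr (1/ln P)" by simp
  have dpos: "real p / 4 > 0" using p2 by simp
  have "(real p powr (1/ln P) - 1)/(real p - real p powr (1/ln P)) \<le> (3 * y) / (real p / 4)"
  proof (rule frac_le)
    show "0 \<le> 3 * y" using y0 by simp
    show "real p powr (1 / ln P) - 1 \<le> 3 * y" by (rule num)
    show "0 < real p / 4" by (rule dpos)
    show "real p / 4 \<le> real p - real p powr (1 / ln P)" by (rule den)
  qed
  also have "\<dots> = 12 * (ln (real p) / real p) / ln P" using p2 lP by (simp add: y_def field_simps)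
  finally show ?thesis .
qed

lemma lnP_ge2:
  fixes P :: real assumes "P \<ge> 8" shows "ln P \<ge> 2"
proof -
  have "exp (2::real) = exp 1 * exp 1" by (simp flip: exp_add)
  also have "\<dots> \<le> (272/100) * (272/100)" using e_less_272 by (intro mult_mono) auto
  finally have "exp (2::real) \<le> P" using assms by simp
  then show ?thesis using assms by (subst ln_ge_iff) auto
qed

lemma W_bound:
  fixes P :: real assumes P8: "P \<ge> 8"
  shows "(\<Prod>p\<in>{p. prime p \<and> real p \<le> P}. 1 + (real p powr (1/ln P) - 1)/(real p - real p powr (1/ln P))) \<le> exp 24"
proof -
  define Q where "Q = {p. prime p \<and> real p \<le> P}"
  have P2: "P \<ge> 2" using P8 by simp
  have P: "ln P \<ge> 2" using lnP_ge2[OF P8] .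
  have finQ: "finite Q" unfolding Q_def
    by (rule finite_subset[of _ "{..nat \<lfloor>P\<rfloor>}"]) (auto simp: le_nat_floor_iff P2)
  define w where "w = (\<lambda>p::nat. (real p powr (1/ln P) - 1)/(real p - real p powr (1/ln P)))"
  have w0: "0 \<le> w p" if "p \<in> Q" for p
  proof -
    have p2: "real p \<ge> 2" using that prime_ge_2_nat by (simp add: Q_def of_nat_le_iff[symmetric, of 2])
    have "1 \<le> real p powr (1/ln P)" using p2 P by (intro ge_one_powr_ge_zero) auto
    moreover have "real p powr (1/ln P) < real p"
      using p2 P powr_less_mono[of "1/ln P" 1 "real p"] by (simp add: field_simps)
    ultimately show ?thesis by (simp add: w_def)
  qed
  have "(\<Prod>p\<in>Q. 1 + w p) \<le> (\<Prod>p\<in>Q. exp (w p))"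
    by (intro prod_mono) (auto simp: w0 exp_ge_add_one_self add_increasing)
  also have "\<dots> = exp (\<Sum>p\<in>Q. w p)" by (simp add: exp_sum finQ)
  also have "(\<Sum>p\<in>Q. w p) \<le> (\<Sum>p\<in>Q. 12 * (ln (real p) / real p) / ln P)"
  proof (intro sum_mono)
    fix p assume "p \<in> Q"
    then show "w p \<le> 12 * (ln (real p) / real p) / ln P"
      using w_bound[of p P] P unfolding Q_def w_def by blast
  qed
  also have "\<dots> = 12 / ln P * (\<Sum>p\<in>Q. ln (real p) / real p)"
    by (simp add: sum_distrib_left sum_divide_distrib mult.commute)
  also have "\<dots> \<le> 12 / ln P * (2 * ln P)"
    using mertens_weak_real[OF P2] P by (intro mult_left_mono) (auto simp: Q_def)
  also have "\<dots> = 24" using P by simp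
  finally show ?thesis unfolding Q_def w_def by simp
qed




lemma pf_prod_subset:
  fixes A :: "nat set" and e :: "nat \<Rightarrow> nat"
  assumes "finite A" "\<forall>p\<in>A. prime p" "x \<in> prime_factors (\<Prod>p\<in>A. p ^ e p)"
  shows "x \<in> A"
proof -
  have x: "prime x" "x dvd (\<Prod>p\<in>A. p ^ e p)"
    using in_prime_factors_imp_prime[OF assms(3)] in_prime_factors_imp_dvd[OF assms(3)] by blast+
  obtain p where p: "p \<in> A" "x dvd p ^ e p" using iffD1[OF prime_dvd_prod_iff[OF assms(1) x(1)] x(2)] by blast
  have "x dvd p" by (rule prime_dvd_power[OF x(1) p(2)])
  moreover have "prime p" using assms(2) p(1) by blast
  ultimately have "x = p" using x(1) primes_dvd_imp_eq by blast
  then show ?thesis using p by simp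
qed

lemma decomp:
  fixes k :: nat and P :: real
  defines "Q \<equiv> {p. prime p \<and> real p \<le> P}"
  assumes k: "k > 0" and finQ: "finite Q"
  shows "\<exists>r. k = sQ Q k * r \<and> smooth P (sQ Q k) \<and> rough P r"
proof -
  define S where "S = prime_factors k"
  define v where "v = (\<lambda>p. multiplicity p k)"
  have finS: "finite S" unfolding S_def by simp
  have primeS: "\<forall>p\<in>S. prime p" unfolding S_def by auto
  have "k = (\<Prod>p\<in>S. p ^ v p)" unfolding S_def v_def using prime_factorization_nat[OF k] .
  also have "\<dots> = (\<Prod>p\<in>S \<inter> Q. p ^ v p) * (\<Prod>p\<in>S - Q. p ^ v p)"
    by (rule prod.Int_Diff[OF finS])
  finally have keq: "k = (\<Prod>p\<in>S \<inter> Q. p ^ v p) * (\<Prod>p\<in>S - Q. p ^ v p)" .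
  have "sQ Q k = (\<Prod>p\<in>Q \<inter> S. p ^ v p) * (\<Prod>p\<in>Q - S. p ^ v p)"
    unfolding sQ_def v_def by (rule prod.Int_Diff[OF finQ])
  also have "(\<Prod>p\<in>Q - S. p ^ v p) = 1"
  proof (rule prod.neutral, rule ballI)
    fix p assume p: "p \<in> Q - S"
    then have "prime p" "p \<notin> prime_factors k" unfolding Q_def S_def by auto
    then have "\<not> p dvd k" using k by (auto intro: prime_factorsI)
    then show "p ^ v p = 1" unfolding v_def by (simp add: not_dvd_imp_multiplicity_0)
  qed
  finally have seq: "sQ Q k = (\<Prod>p\<in>S \<inter> Q. p ^ v p)" by (simp add: Int_commute)
  have sm: "smooth P (sQ Q k)"
    unfolding smooth_def
  proof
    show "sQ Q k > 0" by (rule sQ_pos) (auto simp: Q_def)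
    show "\<forall>p\<in>prime_factors (sQ Q k). real p \<le> P"
    proof
      fix x assume "x \<in> prime_factors (sQ Q k)"
      then have "x \<in> prime_factors (\<Prod>p\<in>S \<inter> Q. p ^ v p)" by (simp only: seq)
      then have "x \<in> S \<inter> Q" by (rule pf_prod_subset[rotated 2]) (use finS primeS in auto)
      then show "real x \<le> P" unfolding Q_def by auto
    qed
  qed
  have ro: "rough P (\<Prod>p\<in>S - Q. p ^ v p)"
    unfolding rough_def
  proof
    show "(\<Prod>p\<in>S - Q. p ^ v p) > 0" using primeS by (intro prod_pos) (auto simp: prime_gt_0_nat)
    show "\<forall>p\<in>prime_factors (\<Prod>p\<in>S - Q. p ^ v p). real p > P"
    proof
      fix x assume "x \<in> prime_factors (\<Prod>p\<in>S - Q. p ^ v p)"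
      then have "x \<in> S - Q" by (rule pf_prod_subset[rotated 2]) (use finS primeS in auto)
      then show "real x > P" unfolding Q_def using primeS by auto
    qed
  qed
  have "k = sQ Q k * (\<Prod>p\<in>S - Q. p ^ v p)" using keq seq by simp
  then show ?thesis using sm ro by blast
qed

lemma coprime_smooth_rough:
  assumes "smooth P m" "rough P n"
  shows "coprime m n"
proof (rule ccontr)
  assume "\<not> coprime m n"
  then have "gcd m n \<noteq> 1" by (simp add: coprime_iff_gcd_eq_1)
  then obtain p where p: "prime p" "p dvd gcd m n" using prime_factor_nat by blast
  have m0: "m > 0" and n0: "n > 0" using assms by (auto simp: smooth_def rough_def)
  have "p \<in> prime_factors m" using p m0 by (auto intro: prime_factorsI)
  then have "real p \<le> P" using assms(1) by (auto simp: smooth_def)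
  moreover have "p \<in> prime_factors n" using p n0 by (auto intro: prime_factorsI)
  then have "real p > P" using assms(2) by (auto simp: rough_def)
  ultimately show False by simp
qed

lemma unique_decomp:
  assumes "smooth P m" "rough P n" "smooth P m'" "rough P n'" "m * n = m' * n'"
  shows "m = m'"
proof -
  have "m dvd m' * n'" using assms(5) by (metis dvd_triv_left)
  then have a: "m dvd m'" using coprime_smooth_rough[OF assms(1,4)] by (simp add: coprime_dvd_mult_left_iff)
  have "m' dvd m * n" using assms(5) by (metis dvd_triv_left)
  then have b: "m' dvd m" using coprime_smooth_rough[OF assms(3,2)] by (simp add: coprime_dvd_mult_left_iff)
  show ?thesis using a b by (rule dvd_antisym)
qed

lemma harm_tail:
  fixes M K :: nat assumes "1 \<le> M" "M \<le> K"
  shows "(\<Sum>k\<in>{M<..K}. 1 / real k) \<le> ln (real K) - ln (real M)"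
  using assms
proof (induction K)
  case 0 then show ?case by simp
next
  case (Suc K)
  show ?case
  proof (cases "M = Suc K")
    case True then show ?thesis by simp
  next
    case False
    then have MK: "M \<le> K" using Suc.prems by simp
    have "{M<..Suc K} = insert (Suc K) {M<..K}" using MK by auto
    then have "(\<Sum>k\<in>{M<..Suc K}. 1 / real k) = 1 / real (Suc K) + (\<Sum>k\<in>{M<..K}. 1 / real k)" by simp
    also have "\<dots> \<le> (ln (real (Suc K)) - ln (real K)) + (ln (real K) - ln (real M))"
    proof -
      have K0: "0 < K" using MK Suc.prems by simp
      have "1 / real (Suc K) \<le> ln (real (Suc K)) - ln (real K)" using ln_gap[of K "Suc K"] K0 by simp
      then show ?thesis using Suc.IH[OF Suc.prems(1) MK] by linarith
    qed
    finally show ?thesis by simp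
  qed
qed

lemma harm_le_ln:
  fixes K :: nat assumes "K \<ge> 1"
  shows "harm K \<le> ln (real K) + (1::real)"
proof -
  have "{1..K} = insert 1 {1<..K}" using assms by auto
  then have "harm K = 1 + (\<Sum>k\<in>{1<..K}. 1 / real k)" by (simp add: harm_def divide_inverse)
  also have "\<dots> \<le> 1 + (ln (real K) - ln (real (1::nat)))" using harm_tail[OF _ assms] by simp
  finally show ?thesis by simp
qed




lemma cpow:
  fixes n :: nat and s t :: real assumes "n > 0"
  shows "1 / (of_nat n powr Complex s t) = complex_of_real (real n powr (-s)) * cis (-(t * ln (real n)))"
proof -
  have "of_nat n powr Complex s t = exp (Complex s t * of_real (ln (real n)))"
    using assms by (simp add: powr_def)
  also have "Complex s t * of_real (ln (real n)) = Complex (s * ln (real n)) (t * ln (real n))"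
    by (simp add: complex_eq_iff)
  also have "exp \<dots> = of_real (exp (s * ln (real n))) * cis (t * ln (real n))"
    by (simp add: exp_eq_polar)
  finally have e: "of_nat n powr Complex s t = of_real (exp (s * ln (real n))) * cis (t * ln (real n))" .
  have r: "real n powr (-s) = exp (- (s * ln (real n)))" using assms by (simp add: powr_def)
  show ?thesis unfolding e r
    by (simp add: exp_minus field_simps cis_divide flip: cis_inverse)
qed

lemma cis_ln_mult:
  fixes m n :: nat assumes "m > 0" "n > 0"
  shows "cis (-(t * ln (real m))) * cis (-(t * ln (real n))) = cis (-(t * ln (real (m * n))))"
  using assms by (simp add: cis_mult ln_mult algebra_simps)

lemma exp_half_le2: "exp (1/2::real) \<le> 2"
proof -
  have "exp (1/2::real) * exp (1/2) = exp 1" by (simp flip: exp_add)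
  also have "\<dots> \<le> 2 * 2" using e_less_272 by simp
  finally have le: "exp (1/2::real) * exp (1/2) \<le> 2 * 2" .
  show ?thesis
  proof (rule ccontr)
    assume "\<not> exp (1/2::real) \<le> 2"
    then have "2 * 2 < exp (1/2::real) * exp (1/2)" by (intro mult_strict_mono) auto
    then show False using le by simp
  qed
qed

lemma powr_sigma_bound:
  fixes k :: nat and T s :: real
  assumes k: "k \<ge> 1" "real k \<le> sqrt T" and T0: "T > 0" and L: "ln T > 0" and s: "\<bar>s - 1/2\<bar> \<le> 1 / ln T"
  shows "real k powr (-s) \<le> 2 / sqrt (real k)"
proof -
  have k0: "real k > 0" using k by simp
  have lnk: "ln (real k) \<le> ln T / 2"
  proof -
    have "ln (real k) \<le> ln (sqrt T)" using k k0 T0 ln_le_cancel_iff[of "real k" "sqrt T"] by simp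
    also have "\<dots> = ln T / 2" using T0 by (simp add: ln_sqrt)
    finally show ?thesis .
  qed
  have lnk0: "ln (real k) \<ge> 0" using k by simp
  have "real k powr (-s) = real k powr (-1/2) * real k powr (1/2 - s)"
    by (simp flip: powr_add)
  also have "real k powr (-1/2) = 1 / sqrt (real k)"
    using k0 by (simp add: powr_minus_divide powr_half_sqrt)
  also have "real k powr (1/2 - s) \<le> 2"
  proof -
    have "(1/2 - s) * ln (real k) \<le> \<bar>1/2 - s\<bar> * ln (real k)" using lnk0 by (intro mult_right_mono) auto
    also have "\<dots> \<le> (1 / ln T) * (ln T / 2)"
      using s lnk lnk0 L by (intro mult_mono) (auto simp: abs_minus_commute)
    also have "\<dots> = 1/2" using L by simp
    finally have "(1/2 - s) * ln (real k) \<le> 1/2" .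
    then have "real k powr (1/2 - s) \<le> exp (1/2)" using k0 by (simp add: powr_def)
    then show ?thesis using exp_half_le2 by linarith
  qed
  then have "1 / sqrt (real k) * real k powr (1/2 - s) \<le> 1 / sqrt (real k) * 2"
    by (intro mult_left_mono) auto
  finally show ?thesis by simp
qed

lemma abs_exp_minus_one:
  fixes z :: real assumes "\<bar>z\<bar> \<le> 1" shows "\<bar>exp z - 1\<bar> \<le> 3 * \<bar>z\<bar>"
proof (cases "z \<ge> 0")
  case True then show ?thesis using exp_minus_one_le[of z] assms by simp
next
  case False
  have a: "1 + z \<le> exp z" by (rule exp_ge_add_one_self)
  have b: "exp z \<le> 1" using False by simp
  have "\<bar>exp z - 1\<bar> = 1 - exp z" "\<bar>z\<bar> = - z" using False b by auto
  moreover have "1 - exp z \<le> - z" using a by linarith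
  ultimately show ?thesis using False by linarith
qed

lemma powr_diff_bound:
  fixes m :: nat and T s e :: real
  assumes m: "m \<ge> 1" "ln (real m) \<le> e * ln T" and L: "ln T > 0" and s: "\<bar>s - 1/2\<bar> \<le> 1 / ln T"
    and e: "0 \<le> e" "e \<le> 1"
  shows "\<bar>real m powr (-s) - real m powr (-1/2)\<bar> \<le> 3 * e / sqrt (real m)"
proof -
  have m0: "real m > 0" using m by simp
  define z where "z = (1/2 - s) * ln (real m)"
  have lnm0: "ln (real m) \<ge> 0" using m by simp
  have zb: "\<bar>z\<bar> \<le> e"
  proof -
    have "\<bar>z\<bar> = \<bar>1/2 - s\<bar> * ln (real m)" using lnm0 by (simp add: z_def abs_mult)
    also have "\<dots> \<le> (1 / ln T) * (e * ln T)"
      using s m lnm0 L by (intro mult_mono) (auto simp: abs_minus_commute)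
    also have "\<dots> = e" using L by simp
    finally show ?thesis .
  qed
  have h: "real m powr (-1/2) = 1 / sqrt (real m)"
    using m0 by (simp add: powr_minus_divide powr_half_sqrt)
  have "real m powr (-s) = real m powr (-1/2) * real m powr (1/2 - s)"
    by (simp flip: powr_add)
  also have "real m powr (1/2 - s) = exp z" using m0 by (simp add: z_def powr_def)
  finally have "real m powr (-s) - real m powr (-1/2) = 1 / sqrt (real m) * (exp z - 1)"
    unfolding h by (simp add: diff_divide_distrib)
  then have "\<bar>real m powr (-s) - real m powr (-1/2)\<bar> = 1 / sqrt (real m) * \<bar>exp z - 1\<bar>"
    by (simp add: abs_mult)
  also have "\<dots> \<le> 1 / sqrt (real m) * (3 * e)"
    using abs_exp_minus_one[of z] zb e by (intro mult_left_mono) auto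
  finally show ?thesis by simp
qed




lemma exp2_ge: "2 * pi \<le> exp (2::real)"
proof -
  have e: "exp (1::real) \<ge> 27/10"
  proof -
    have "exp 1 - 5837465777 / 2147483648 \<ge> - inverse (2 ^ 32::real)" using e_approx_32 by (simp only: abs_le_iff) linarith
    then show ?thesis by simp
  qed
  have "exp (2::real) = exp 1 * exp 1" by (simp flip: exp_add)
  also have "\<dots> \<ge> (27/10) * (27/10)" using e by (intro mult_mono) auto
  finally have "exp (2::real) \<ge> 729/100" by simp
  moreover have "pi \<le> 3.1415926535899" using pi_approx by simp
  ultimately show ?thesis by simp
qed

lemma harm_le_L:
  fixes K :: nat and L :: real
  assumes "ln (real K) \<le> L / 2" "L \<ge> 2"
  shows "harm K \<le> L"
proof (cases "K = 0")
  case True then show ?thesis using assms by (simp add: harm_def)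
next
  case False
  then have "harm K \<le> ln (real K) + 1" by (intro harm_le_ln) auto
  then show ?thesis using assms by simp
qed




lemma main_bound:
  fixes T P e s :: real
  assumes T2: "T \<ge> 2" and P8: "P \<ge> 8" and e1: "1 / ln T < e" and e2: "e < 1/10"
    and s1: "1/2 - 1/ln T \<le> s" and s2: "s \<le> 1/2 + 1/ln T"
  shows "integral {T..2*T} (\<lambda>t. (cmod (
        (\<Sum>n\<in>{1..nat \<lfloor>sqrt (t / (2*pi))\<rfloor>}. 1 / (of_nat n powr Complex s t))
      - (\<Sum>m\<in>{m. smooth P m \<and> real m \<le> T powr e}. 1 / (of_nat m powr Complex (1/2) t))
        * (\<Sum>n\<in>{n. rough P n \<and> real n \<le> T powr (1/2 - 2*e)}. 1 / (of_nat n powr Complex s t))))\<^sup>2)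
    \<le> (91 + 4 * exp 24) * T * ln T * (exp (- e * ln T / ln P) + e)"
proof -
  define L where "L = ln T"
  have T0: "T > 0" using T2 by simp
  have L0: "L > 0" using T2 by (simp add: L_def)
  have eL: "1 < e * L" using e1 L0 by (simp add: L_def field_simps)
  have e0: "0 < e"
  proof (rule ccontr)
    assume "\<not> 0 < e"
    then have "e * L \<le> 0" using L0 mult_nonpos_nonneg[of e L] by simp
    then show False using eL by simp
  qed
  have L10: "L > 10"
  proof -
    have "e * L \<le> (1/10) * L" using e2 L0 by (intro mult_right_mono) auto
    then show ?thesis using eL by linarith
  qed
  have sab: "\<bar>s - 1/2\<bar> \<le> 1 / ln T" using s1 s2 by (simp add: abs_le_iff)
  have lnT: "ln T > 0" using L0 by (simp add: L_def)
  define K where "K = nat \<lfloor>sqrt (T/pi)\<rfloor>"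
  define I where "I = {1..K}"
  have KsTpi: "real K \<le> sqrt (T/pi)" unfolding K_def using T0 by (simp add: le_nat_floor_iff[symmetric])
  have sTpi: "sqrt (T/pi) \<le> sqrt T" using T0 pi_ge_two by (intro real_sqrt_le_mono) (simp add: field_simps)
  have KsT: "real K \<le> sqrt T" using KsTpi sTpi by linarith
  have K2: "(real K)\<^sup>2 \<le> T / pi"
  proof -
    have "(real K)\<^sup>2 \<le> (sqrt (T/pi))\<^sup>2" using KsTpi by (intro power_mono) auto
    then show ?thesis using T0 by simp
  qed
  have lnK: "ln (real K) \<le> L / 2" if "K \<ge> 1"
  proof -
    have "ln (real K) \<le> ln (sqrt T)" using that KsT T0 ln_le_cancel_iff[of "real K" "sqrt T"] by simp
    then show ?thesis using T0 by (simp add: ln_sqrt L_def)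
  qed
  have harmK: "harm K \<le> L"
  proof (cases "K = 0")
    case True then show ?thesis using L0 by (simp add: harm_def)
  next
    case False then show ?thesis using lnK L10 by (intro harm_le_L) auto
  qed
  define Q where "Q = {p. prime p \<and> real p \<le> P}"
  have finQ: "finite Q" unfolding Q_def
    by (rule finite_subset[of _ "{..nat \<lfloor>P\<rfloor>}"]) (use P8 le_nat_floor_iff[of P] in auto)
  have primeQ: "\<forall>p\<in>Q. prime p" by (simp add: Q_def)
  define X1 where "X1 = T powr e"
  define X2 where "X2 = T powr (1/2 - 2*e)"
  define A where "A = {m. smooth P m \<and> real m \<le> X1}"
  define B where "B = {n. rough P n \<and> real n \<le> X2}"
  have X1pos: "X1 > 0" and X2pos: "X2 > 0" using T0 by (auto simp: X1_def X2_def)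
  have finA: "finite A" unfolding A_def
    by (rule finite_subset[of _ "{..nat \<lfloor>X1\<rfloor>}"]) (use X1pos le_nat_floor_iff[of X1] in auto)
  have finB: "finite B" unfolding B_def
    by (rule finite_subset[of _ "{..nat \<lfloor>X2\<rfloor>}"]) (use X2pos le_nat_floor_iff[of X2] in auto)
  have lnX1: "ln X1 = e * L" using T0 by (simp add: X1_def L_def ln_powr)
  have lnX2: "ln X2 = (1/2 - 2*e) * L" using T0 by (simp add: X2_def L_def ln_powr)
  have X2sT: "X2 \<le> sqrt T"
  proof -
    have "X2 \<le> T powr (1/2)" unfolding X2_def using T2 e0 by (intro powr_mono) auto
    then show ?thesis using T0 by (simp add: powr_half_sqrt)
  qed
  have AB: "m \<ge> 1 \<and> n \<ge> 1 \<and> ln (real m) \<le> e * L \<and> real n \<le> sqrt T \<and> 2 * pi * (real (m * n))\<^sup>2 \<le> T \<and> m * n \<in> I"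
    if mn: "m \<in> A" "n \<in> B" for m n
  proof -
    have m1: "m \<ge> 1" using mn by (auto simp: A_def smooth_def)
    have n1: "n \<ge> 1" using mn by (auto simp: B_def rough_def)
    have mX: "real m \<le> X1" and nX: "real n \<le> X2" using mn by (auto simp: A_def B_def)
    have lnm: "ln (real m) \<le> e * L" using mX m1 lnX1 X1pos ln_le_cancel_iff[of "real m" X1] by simp
    have prod: "real (m * n) \<le> X1 * X2" using mX nX m1 by (simp add: mult_mono)
    have "(X1 * X2)\<^sup>2 = T * exp (- 2 * e * L)"
    proof -
      have "X1 * X2 = T powr (1/2 - e)" unfolding X1_def X2_def by (simp flip: powr_add)
      then have "(X1 * X2)\<^sup>2 = T powr (2 * (1/2 - e))" using T0 powr_power[of T "1/2 - e" 2] by simp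
      also have "\<dots> = T powr 1 * T powr (-2 * e)" by (simp only: powr_add[symmetric]) (simp add: algebra_simps)
      also have "\<dots> = T * exp (-2 * e * L)" using T0 by (simp add: powr_def L_def)
      finally show ?thesis by simp
    qed
    also have "\<dots> \<le> T * exp (-2)" using eL T0 by (intro mult_left_mono) auto
    finally have sq: "(X1 * X2)\<^sup>2 \<le> T * exp (-2)" .
    have "2 * pi * (real (m * n))\<^sup>2 \<le> 2 * pi * (X1 * X2)\<^sup>2"
      using prod by (intro mult_left_mono power_mono) auto
    also have "\<dots> \<le> 2 * pi * (T * exp (-2))" using sq by (intro mult_left_mono) auto
    also have "\<dots> = T * (2 * pi / exp 2)" by (simp add: exp_minus field_simps)
    also have "\<dots> \<le> T * 1" using exp2_ge T0 by (intro mult_left_mono) auto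
    finally have tpi: "2 * pi * (real (m * n))\<^sup>2 \<le> T" by simp
    have "pi * (real (m * n))\<^sup>2 \<le> 2 * pi * (real (m * n))\<^sup>2" by simp
    then have "pi * (real (m * n))\<^sup>2 \<le> T" using tpi by linarith
    then have "(real (m * n))\<^sup>2 \<le> T / pi" using pi_gt_zero by (simp add: pos_le_divide_eq mult.commute)
    then have "real (m * n) \<le> sqrt (T / pi)" by (simp add: real_le_rsqrt)
    then have "m * n \<le> K" unfolding K_def using T0 by (simp add: le_nat_floor_iff)
    then have "m * n \<in> I" using m1 n1 by (simp add: I_def)
    moreover have "real n \<le> sqrt T" using nX X2sT by linarith
    ultimately show ?thesis using m1 n1 lnm tpi by simp
  qed
  define c where "c = (\<lambda>k. \<Sum>x\<in>{x\<in>A\<times>B. fst x * snd x = k}. real (fst x) powr (-1/2) * real (snd x) powr (-s))"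
  define y where "y = (\<lambda>k::nat. real k powr (-s))"
  define a where "a = (\<lambda>k::nat. 2 * pi * (real k)\<^sup>2)"
  define G where "G = (\<lambda>k. \<exists>m\<in>A. \<exists>n\<in>B. m * n = k)"
  have cG: "c k = real m powr (-1/2) * real n powr (-s)" if mn: "m\<in>A" "n\<in>B" "m*n = k" for m n k
  proof -
    have "{x\<in>A\<times>B. fst x * snd x = k} = {(m,n)}"
    proof (intro equalityI subsetI)
      fix x assume x: "x \<in> {x\<in>A\<times>B. fst x * snd x = k}"
      obtain m' n' where x': "x = (m', n')" by (cases x)
      have h: "m' \<in> A" "n' \<in> B" "m' * n' = m * n" using x x' mn by auto
      have "m' = m" using h mn by (intro unique_decomp[of P m' n' m n]) (auto simp: A_def B_def)
      moreover have "m > 0" using mn by (auto simp: A_def smooth_def)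
      ultimately have "n' = n" using h by simp
      then show "x \<in> {(m,n)}" using x' \<open>m' = m\<close> by simp
    qed (use mn in auto)
    note e = this
    show ?thesis unfolding c_def e by simp
  qed
  have cnG: "c k = 0" if "\<not> G k" for k
  proof -
    have e: "{x\<in>A\<times>B. fst x * snd x = k} = {}" using that by (auto simp: G_def)
    show ?thesis unfolding c_def e by simp
  qed
  have kI: "k \<ge> 1 \<and> real k \<le> sqrt T" if "k \<in> I" for k
    using that KsT by (auto simp: I_def) 
  have yb: "0 \<le> y k \<and> y k \<le> 2 / sqrt (real k)" if "k \<in> I" for k
    using powr_sigma_bound[of k T s] kI[OF that] T0 lnT sab by (simp add: y_def)
  have cb: "0 \<le> c k \<and> c k \<le> 2 / sqrt (real k)" if "k \<in> I" for k
  proof (cases "G k")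
    case True
    then obtain m n where mn: "m\<in>A" "n\<in>B" "m*n = k" by (auto simp: G_def)
    have ab: "m \<ge> 1" "n \<ge> 1" "real n \<le> sqrt T" using AB[OF mn(1,2)] by auto
    have "c k = real m powr (-1/2) * real n powr (-s)" by (rule cG[OF mn])
    also have "real m powr (-1/2) = 1 / sqrt (real m)" using ab by (simp add: powr_minus_divide powr_half_sqrt)
    also have "1 / sqrt (real m) * real n powr (-s) \<le> 1 / sqrt (real m) * (2 / sqrt (real n))"
      using powr_sigma_bound[of n T s] ab T0 lnT sab by (intro mult_left_mono) auto
    also have "\<dots> = 2 / sqrt (real k)" unfolding mn(3)[symmetric] by (simp add: real_sqrt_mult)
    finally show ?thesis using cG[OF mn] by simp
  next
    case False then show ?thesis using cnG by simp
  qed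
  have wb: "\<bar>- c k\<bar> + \<bar>y k\<bar> \<le> 4 / sqrt (real k)" if "k \<in> {1..K}" for k
    using cb[of k] yb[of k] that by (simp add: I_def)
  define \<beta> where "\<beta> = (\<lambda>k t. - c k + (if t \<in> {a k..} then y k else 0))"
  define S where "S = (\<lambda>k. if G k then 36 * e / real k else 4 / real k)"
  have Sb: "(\<beta> k t)\<^sup>2 \<le> S k" if k: "k \<in> I" and t: "t \<in> {T..2*T}" for k t
  proof (cases "G k")
    case True
    then obtain m n where mn: "m\<in>A" "n\<in>B" "m*n = k" by (auto simp: G_def)
    have ab: "m \<ge> 1" "n \<ge> 1" "ln (real m) \<le> e * L" "real n \<le> sqrt T" "2 * pi * (real k)\<^sup>2 \<le> T"
      using AB[OF mn(1,2)] mn(3) by auto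
    have "a k \<le> t" using ab t by (simp add: a_def)
    then have "\<beta> k t = y k - c k" by (simp add: \<beta>_def)
    also have "\<dots> = real n powr (-s) * (real m powr (-s) - real m powr (-1/2))"
      using cG[OF mn] unfolding mn(3)[symmetric] by (simp add: y_def powr_mult algebra_simps)
    finally have beq: "\<beta> k t = real n powr (-s) * (real m powr (-s) - real m powr (-1/2))" .
    have b1: "\<bar>real n powr (-s)\<bar> \<le> 2 / sqrt (real n)"
      using powr_sigma_bound[of n T s] ab T0 lnT sab by simp
    have b2: "\<bar>real m powr (-s) - real m powr (-1/2)\<bar> \<le> 3 * e / sqrt (real m)"
      using powr_diff_bound[of m e T s] ab lnT sab e0 e2 by (simp add: L_def)
    have "\<bar>\<beta> k t\<bar> \<le> (2 / sqrt (real n)) * (3 * e / sqrt (real m))"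
      unfolding beq abs_mult using b1 b2 by (intro mult_mono) auto
    also have "\<dots> = 6 * e / sqrt (real k)" unfolding mn(3)[symmetric] by (simp add: real_sqrt_mult field_simps)
    finally have bb: "\<bar>\<beta> k t\<bar> \<le> 6 * e / sqrt (real k)" .
    have "(\<beta> k t)\<^sup>2 = \<bar>\<beta> k t\<bar>\<^sup>2" by simp
    also have "\<dots> \<le> (6 * e / sqrt (real k))\<^sup>2" using bb by (intro power_mono) auto
    also have "\<dots> = 36 * e * e / real k" using ab mn(3) by (simp add: power_divide power2_eq_square)
    also have "\<dots> \<le> 36 * e / real k" using e0 e2 ab mn(3)
      by (intro divide_right_mono) (auto simp: mult_le_cancel_left1)
    finally show ?thesis using True by (simp add: S_def)
  next
    case False
    have yk: "0 \<le> y k" "y k \<le> 2 / sqrt (real k)" using yb[OF k] by auto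
    have k1: "real k \<ge> 1" using kI[OF k] by simp
    have "\<bar>\<beta> k t\<bar> \<le> 2 / sqrt (real k)" using yk cnG[OF False] by (simp add: \<beta>_def)
    then have "(\<beta> k t)\<^sup>2 \<le> (2 / sqrt (real k))\<^sup>2"
      by (metis abs_ge_zero power2_abs power_mono)
    also have "\<dots> = 4 / real k" using k1 by (simp add: power_divide)
    finally show ?thesis using False by (simp add: S_def)
  qed
  \<comment> \<open>the integrand as a single Dirichlet polynomial\<close>
  define E where "E = (\<lambda>t k. cis (-(t * ln (real k))))"
  have S1eq: "(\<Sum>n\<in>{1..nat \<lfloor>sqrt (t / (2*pi))\<rfloor>}. 1 / (of_nat n powr Complex s t))
      = (\<Sum>k\<in>I. of_real (if t \<in> {a k..} then y k else 0) * E t k)" if t: "t \<in> {T..2*T}" for t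
  proof -
    define N where "N = nat \<lfloor>sqrt (t / (2*pi))\<rfloor>"
    have t0: "t > 0" using t T0 by auto
    have setN: "{1..N} = {k\<in>I. a k \<le> t}"
    proof (intro equalityI subsetI)
      fix k assume k: "k \<in> {1..N}"
      then have k1: "k \<ge> 1" and kle: "real k \<le> sqrt (t / (2*pi))"
        unfolding N_def using t0 by (auto simp: le_nat_floor_iff)
      have "sqrt (t / (2*pi)) \<le> sqrt (T / pi)" using t by (intro real_sqrt_le_mono) (auto simp: field_simps)
      then have "real k \<le> sqrt (T / pi)" using kle by linarith
      then have "k \<le> K" unfolding K_def using T0 by (simp add: le_nat_floor_iff)
      moreover have "a k \<le> t"
      proof -
        have "(real k)\<^sup>2 \<le> (sqrt (t / (2*pi)))\<^sup>2" using kle by (intro power_mono) auto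
        then have "(real k)\<^sup>2 \<le> t / (2*pi)" using t0 by simp
        then show ?thesis unfolding a_def by (simp add: field_simps)
      qed
      ultimately show "k \<in> {k\<in>I. a k \<le> t}" using k1 by (simp add: I_def)
    next
      fix k assume k: "k \<in> {k\<in>I. a k \<le> t}"
      then have "(real k)\<^sup>2 \<le> t / (2*pi)" unfolding a_def by (simp add: field_simps)
      then have "real k \<le> sqrt (t / (2*pi))" by (simp add: real_le_rsqrt)
      then have "k \<le> N" unfolding N_def using t0 by (simp add: le_nat_floor_iff)
      then show "k \<in> {1..N}" using k by (simp add: I_def)
    qed
    have "(\<Sum>n\<in>{1..N}. 1 / (of_nat n powr Complex s t)) = (\<Sum>n\<in>{1..N}. of_real (y n) * E t n)"
      by (intro sum.cong refl) (simp add: cpow y_def E_def)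
    also have "\<dots> = (\<Sum>k\<in>{k\<in>I. a k \<le> t}. of_real (y k) * E t k)" by (simp only: setN)
    also have "\<dots> = (\<Sum>k\<in>I. if a k \<le> t then of_real (y k) * E t k else 0)"
      by (rule sum.inter_filter) (simp add: I_def)
    also have "\<dots> = (\<Sum>k\<in>I. of_real (if t \<in> {a k..} then y k else 0) * E t k)"
      by (intro sum.cong refl) simp
    finally show ?thesis by (simp add: N_def)
  qed
  have S23eq: "(\<Sum>m\<in>A. 1 / (of_nat m powr Complex (1/2) t)) * (\<Sum>n\<in>B. 1 / (of_nat n powr Complex s t))
      = (\<Sum>k\<in>I. of_real (c k) * E t k)" for t
  proof -
    define f where "f = (\<lambda>x::nat\<times>nat. of_real (real (fst x) powr (-1/2) * real (snd x) powr (-s)) * E t (fst x * snd x))"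
    have "(\<Sum>m\<in>A. 1 / (of_nat m powr Complex (1/2) t)) * (\<Sum>n\<in>B. 1 / (of_nat n powr Complex s t))
        = (\<Sum>m\<in>A. \<Sum>n\<in>B. (1 / (of_nat m powr Complex (1/2) t)) * (1 / (of_nat n powr Complex s t)))"
      by (rule sum_product)
    also have "\<dots> = (\<Sum>m\<in>A. \<Sum>n\<in>B. f (m, n))"
    proof (intro sum.cong refl)
      fix m n assume mn: "m \<in> A" "n \<in> B"
      then have m0: "m > 0" and n0: "n > 0" by (auto simp: A_def B_def smooth_def rough_def)
      have "(1 / (of_nat m powr Complex (1/2) t)) * (1 / (of_nat n powr Complex s t))
          = of_real (real m powr (-(1/2))) * of_real (real n powr (-s)) * (E t m * E t n)"
        unfolding cpow[OF m0] cpow[OF n0] E_def by (simp add: algebra_simps)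
      also have "E t m * E t n = E t (m * n)" unfolding E_def by (rule cis_ln_mult[OF m0 n0])
      finally show "(1 / (of_nat m powr Complex (1/2) t)) * (1 / (of_nat n powr Complex s t)) = f (m, n)"
        by (simp add: f_def)
    qed
    also have "\<dots> = (\<Sum>x\<in>A\<times>B. f x)" by (simp add: sum.cartesian_product)
    also have "\<dots> = (\<Sum>k\<in>I. \<Sum>x\<in>{x. x \<in> A\<times>B \<and> fst x * snd x = k}. f x)"
    proof (rule sum.group[symmetric])
      show "finite (A \<times> B)" using finA finB by simp
      show "finite I" by (simp add: I_def)
      show "(\<lambda>x. fst x * snd x) ` (A \<times> B) \<subseteq> I" using AB by auto
    qed
    also have "\<dots> = (\<Sum>k\<in>I. of_real (c k) * E t k)"
    proof (intro sum.cong refl)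
      fix k
      have "(\<Sum>x\<in>{x. x \<in> A\<times>B \<and> fst x * snd x = k}. f x)
          = (\<Sum>x\<in>{x. x \<in> A\<times>B \<and> fst x * snd x = k}. of_real (real (fst x) powr (-1/2) * real (snd x) powr (-s)) * E t k)"
        by (intro sum.cong refl) (simp add: f_def)
      also have "\<dots> = of_real (c k) * E t k"
        by (simp add: c_def sum_distrib_right)
      finally show "(\<Sum>x\<in>{x. x \<in> A\<times>B \<and> fst x * snd x = k}. f x) = of_real (c k) * E t k" .
    qed
    finally show ?thesis .
  qed
  have ident: "(cmod (
        (\<Sum>n\<in>{1..nat \<lfloor>sqrt (t / (2*pi))\<rfloor>}. 1 / (of_nat n powr Complex s t))
      - (\<Sum>m\<in>{m. smooth P m \<and> real m \<le> T powr e}. 1 / (of_nat m powr Complex (1/2) t))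
        * (\<Sum>n\<in>{n. rough P n \<and> real n \<le> T powr (1/2 - 2*e)}. 1 / (of_nat n powr Complex s t))))\<^sup>2
      = (cmod (\<Sum>k\<in>I. complex_of_real (\<beta> k t) * cis (-(t * ln (real k)))))\<^sup>2"
    if t: "t \<in> {T..2*T}" for t
  proof -
    have "{m. smooth P m \<and> real m \<le> T powr e} = A" by (simp add: A_def X1_def)
    moreover have "{n. rough P n \<and> real n \<le> T powr (1/2 - 2*e)} = B" by (simp add: B_def X2_def)
    ultimately have "(\<Sum>n\<in>{1..nat \<lfloor>sqrt (t / (2*pi))\<rfloor>}. 1 / (of_nat n powr Complex s t))
      - (\<Sum>m\<in>{m. smooth P m \<and> real m \<le> T powr e}. 1 / (of_nat m powr Complex (1/2) t))
        * (\<Sum>n\<in>{n. rough P n \<and> real n \<le> T powr (1/2 - 2*e)}. 1 / (of_nat n powr Complex s t))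
      = (\<Sum>k\<in>I. of_real (if t \<in> {a k..} then y k else 0) * E t k) - (\<Sum>k\<in>I. of_real (c k) * E t k)"
      using S1eq[OF t] S23eq[of t] by simp
    also have "\<dots> = (\<Sum>k\<in>I. complex_of_real (\<beta> k t) * cis (-(t * ln (real k))))"
      by (simp add: sum_subtractf[symmetric] \<beta>_def E_def algebra_simps)
    finally show ?thesis by simp
  qed
  have intb: "integral {T..2*T} (\<lambda>t. (cmod (
        (\<Sum>n\<in>{1..nat \<lfloor>sqrt (t / (2*pi))\<rfloor>}. 1 / (of_nat n powr Complex s t))
      - (\<Sum>m\<in>{m. smooth P m \<and> real m \<le> T powr e}. 1 / (of_nat m powr Complex (1/2) t))
        * (\<Sum>n\<in>{n. rough P n \<and> real n \<le> T powr (1/2 - 2*e)}. 1 / (of_nat n powr Complex s t))))\<^sup>2)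
      \<le> T * (\<Sum>k\<in>I. S k) + 128 * (real K)\<^sup>2"
  proof -
    have "integral {T..2*T} (\<lambda>t. (cmod (
        (\<Sum>n\<in>{1..nat \<lfloor>sqrt (t / (2*pi))\<rfloor>}. 1 / (of_nat n powr Complex s t))
      - (\<Sum>m\<in>{m. smooth P m \<and> real m \<le> T powr e}. 1 / (of_nat m powr Complex (1/2) t))
        * (\<Sum>n\<in>{n. rough P n \<and> real n \<le> T powr (1/2 - 2*e)}. 1 / (of_nat n powr Complex s t))))\<^sup>2)
      = integral {T..2*T} (\<lambda>t. (cmod (\<Sum>k\<in>I. complex_of_real (\<beta> k t) * cis (-(t * ln (real k)))))\<^sup>2)"
      by (rule integral_cong) (rule ident)
    also have "\<dots> \<le> T * (\<Sum>k\<in>I. S k) + (\<Sum>j\<in>I. \<Sum>k\<in>I. if j = k then 0 else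
         2*(\<bar>- c j\<bar>+\<bar>y j\<bar>)*(\<bar>- c k\<bar>+\<bar>y k\<bar>)/\<bar>ln (real k) - ln (real j)\<bar>)"
      unfolding \<beta>_def
    proof (rule mv[where I=I and x="\<lambda>k. - c k" and y=y and a=a and S=S and T=T])
      show "finite I" by (simp add: I_def)
      show "0 \<le> T" using T0 by simp
      show "\<And>k. k \<in> I \<Longrightarrow> 0 < k" by (simp add: I_def)
      show "\<And>k t. k \<in> I \<Longrightarrow> t \<in> {T..2 * T} \<Longrightarrow> (- c k + (if t \<in> {a k..} then y k else 0))\<^sup>2 \<le> S k"
        using Sb unfolding \<beta>_def by blast
    qed
    also have "(\<Sum>j\<in>I. \<Sum>k\<in>I. if j = k then 0 else
         2*(\<bar>- c j\<bar>+\<bar>y j\<bar>)*(\<bar>- c k\<bar>+\<bar>y k\<bar>)/\<bar>ln (real k) - ln (real j)\<bar>) \<le> 128 * (real K)\<^sup>2"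
      unfolding I_def by (rule offdiag[where x="\<lambda>k. - c k" and y=y and K=K]) (rule wb)
    finally show ?thesis by simp
  qed
  have Sk: "S k \<le> 36 * e * (1 / real k) + 4 * ((if X2 < real k then 1 / real k else 0)
            + (if X1 < real (sQ Q k) then 1 / real k else 0))" if k: "k \<in> I" for k
  proof (cases "G k")
    case True
    then show ?thesis by (simp add: S_def)
  next
    case False
    have k0: "k > 0" using k by (simp add: I_def)
    obtain r where r: "k = sQ Q k * r" "smooth P (sQ Q k)" "rough P r"
      using decomp[of k P] k0 finQ unfolding Q_def by blast
    have "X1 < real (sQ Q k) \<or> X2 < real r"
    proof (rule ccontr)
      assume "\<not> (X1 < real (sQ Q k) \<or> X2 < real r)"
      then have "sQ Q k \<in> A" "r \<in> B" using r by (auto simp: A_def B_def)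
      then have "G k" unfolding G_def using r(1)[symmetric] by blast
      then show False using False by simp
    qed
    moreover have "real r \<le> real k"
    proof -
      have "sQ Q k \<ge> 1" using r(2) by (simp add: smooth_def)
      then have "1 * r \<le> sQ Q k * r" by (rule mult_le_mono1)
      then have "r \<le> k" using r(1) by simp
      then show ?thesis by simp
    qed
    ultimately have "X1 < real (sQ Q k) \<or> X2 < real k" by linarith
    then have "4 / real k \<le> 4 * ((if X2 < real k then 1 / real k else 0)
            + (if X1 < real (sQ Q k) then 1 / real k else 0))" using k0 by auto
    moreover have "0 \<le> 36 * e * (1 / real k)" using e0 by simp
    ultimately show ?thesis using False by (simp add: S_def)
  qed
  have harmI: "(\<Sum>k\<in>I. 1 / real k) = harm K" by (simp add: I_def harm_def divide_inverse)
  have tail: "(\<Sum>k\<in>I. if X2 < real k then 1 / real k else 0) \<le> 2 * e * L + 1"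
  proof -
    define M where "M = nat \<lfloor>X2\<rfloor>"
    have X21: "X2 \<ge> 1" unfolding X2_def using T2 e2 by (intro ge_one_powr_ge_zero) auto
    have M1: "M \<ge> 1" unfolding M_def using X21 by (simp add: le_nat_floor_iff)
    have setM: "{k\<in>I. X2 < real k} = {M<..K}"
      unfolding I_def M_def using M1 X21 le_nat_floor_iff[of X2] by (auto simp: M_def not_le[symmetric])
    have "(\<Sum>k\<in>I. if X2 < real k then 1 / real k else 0) = (\<Sum>k\<in>{k\<in>I. X2 < real k}. 1 / real k)"
      by (rule sum.inter_filter[symmetric]) (simp add: I_def)
    also have "\<dots> = (\<Sum>k\<in>{M<..K}. 1 / real k)" by (simp only: setM)
    also have "\<dots> \<le> 2 * e * L + 1"
    proof (cases "M < K")
      case False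
      then have "{M<..K} = {}" by auto
      then show ?thesis using eL e0 L0 by simp
    next
      case True
      have h1: "(\<Sum>k\<in>{M<..K}. 1 / real k) \<le> ln (real K) - ln (real M)"
        using True M1 by (intro harm_tail) auto
      have h2: "ln (real K) \<le> L / 2" using lnK True M1 by simp
      have h3: "ln (real M) \<ge> (1/2 - 2*e) * L - 1"
      proof -
        have "X2 < real M + 1" unfolding M_def using X21 by linarith
        then have "X2 / 2 \<le> real M" using M1 by simp
        then have "ln (X2 / 2) \<le> ln (real M)" using X21 M1 ln_le_cancel_iff[of "X2/2" "real M"] by simp
        moreover have "ln (X2 / 2) = ln X2 - ln 2" using X21 by (simp add: ln_div)
        moreover have "ln (2::real) \<le> 1" using ln_2_less_1 by simp
        ultimately show ?thesis using lnX2 by linarith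
      qed
      have "(1/2 - 2*e) * L = L/2 - 2 * e * L" by (simp add: algebra_simps)
      then show ?thesis using h1 h2 h3 by linarith
    qed
    finally show ?thesis .
  qed
  define dl where "dl = 1 / ln P"
  define Ex where "Ex = exp (- e * ln T / ln P)"
  have lnP: "ln P \<ge> 2" using lnP_ge2[OF P8] .
  have dl0: "0 \<le> dl" "dl < 1" using lnP by (auto simp: dl_def field_simps)
  have X1dl: "X1 powr (- dl) = Ex"
    unfolding X1_def Ex_def dl_def using T0 by (simp add: powr_powr powr_def)
  have rank: "(\<Sum>k\<in>I. if X1 < real (sQ Q k) then 1 / real k else 0) \<le> Ex * exp 24 * L"
  proof -
    have "(\<Sum>k\<in>I. if X1 < real (sQ Q k) then 1 / real k else 0)
        \<le> (\<Sum>k\<in>I. X1 powr (- dl) * (real (sQ Q k) powr dl / real k))"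
    proof (intro sum_mono)
      fix k assume k: "k \<in> I"
      have k0: "real k > 0" using k by (simp add: I_def)
      show "(if X1 < real (sQ Q k) then 1 / real k else 0) \<le> X1 powr (- dl) * (real (sQ Q k) powr dl / real k)"
      proof (cases "X1 < real (sQ Q k)")
        case True
        have "1 \<le> (real (sQ Q k) / X1) powr dl"
          using True X1pos dl0 by (intro ge_one_powr_ge_zero) (auto simp: field_simps)
        also have "\<dots> = X1 powr (- dl) * real (sQ Q k) powr dl"
          using X1pos by (simp add: powr_divide powr_minus field_simps)
        finally have "1 / real k \<le> X1 powr (- dl) * real (sQ Q k) powr dl / real k"
          using k0 by (intro divide_right_mono) auto
        then show ?thesis using True by simp
      qed (simp)
    qed
    also have "\<dots> = X1 powr (- dl) * (\<Sum>k\<in>{1..K}. real (sQ Q k) powr dl / real k)"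
      by (simp add: I_def sum_distrib_left)
    finally have r1: "(\<Sum>k\<in>I. if X1 < real (sQ Q k) then 1 / real k else 0)
        \<le> Ex * (\<Sum>k\<in>{1..K}. real (sQ Q k) powr dl / real k)" unfolding X1dl .
    define W where "W = (\<Prod>p\<in>Q. 1 + (real p powr dl - 1)/(real p - real p powr dl))"
    have r2: "(\<Sum>k\<in>{1..K}. real (sQ Q k) powr dl / real k) \<le> W * harm K"
      unfolding W_def by (rule rankin_sum[OF finQ primeQ dl0])
    have r3: "W \<le> exp 24" unfolding W_def Q_def dl_def by (rule W_bound[OF P8])
    have "W * harm K \<le> exp 24 * L" using r3 harmK by (intro mult_mono) (auto simp: harm_nonneg)
    then have "(\<Sum>k\<in>{1..K}. real (sQ Q k) powr dl / real k) \<le> exp 24 * L" using r2 by linarith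
    then have "Ex * (\<Sum>k\<in>{1..K}. real (sQ Q k) powr dl / real k) \<le> Ex * (exp 24 * L)"
      by (intro mult_left_mono) (auto simp: Ex_def)
    then show ?thesis using r1 by simp
  qed
  have SS: "(\<Sum>k\<in>I. S k) \<le> 48 * e * L + 4 * exp 24 * L * Ex"
  proof -
    have "(\<Sum>k\<in>I. S k) \<le> (\<Sum>k\<in>I. 36 * e * (1 / real k) + 4 * ((if X2 < real k then 1 / real k else 0)
            + (if X1 < real (sQ Q k) then 1 / real k else 0)))"
      by (intro sum_mono Sk)
    also have "\<dots> = 36 * e * (\<Sum>k\<in>I. 1 / real k) + 4 * ((\<Sum>k\<in>I. if X2 < real k then 1 / real k else 0)
            + (\<Sum>k\<in>I. if X1 < real (sQ Q k) then 1 / real k else 0))"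
      by (simp add: sum.distrib sum_distrib_left)
    also have "\<dots> \<le> 36 * e * L + 4 * ((2 * e * L + 1) + Ex * exp 24 * L)"
    proof -
      have "36 * e * (\<Sum>k\<in>I. 1 / real k) \<le> 36 * e * L"
        unfolding harmI using harmK e0 by (intro mult_left_mono) auto
      moreover have "4 * ((\<Sum>k\<in>I. if X2 < real k then 1 / real k else 0)
            + (\<Sum>k\<in>I. if X1 < real (sQ Q k) then 1 / real k else 0)) \<le> 4 * ((2 * e * L + 1) + Ex * exp 24 * L)"
        using add_mono[OF tail rank] by simp
      ultimately show ?thesis by (rule add_mono)
    qed
    also have "\<dots> \<le> 48 * e * L + 4 * exp 24 * L * Ex" using eL by (simp add: algebra_simps)
    finally show ?thesis .
  qed
  have KT: "128 * (real K)\<^sup>2 \<le> 43 * T * (e * L)"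
  proof -
    have "128 * (real K)\<^sup>2 \<le> 128 * (T / pi)" using K2 by simp
    also have "\<dots> \<le> 128 * (T / 3)" using pi_gt3 T0 by (intro mult_left_mono divide_left_mono) auto
    also have "\<dots> \<le> 43 * T * 1" using T0 by simp
    also have "\<dots> \<le> 43 * T * (e * L)" using eL T0 by (intro mult_left_mono) auto
    finally show ?thesis .
  qed
  have Ex0: "Ex \<ge> 0" by (simp add: Ex_def)
  have "T * (\<Sum>k\<in>I. S k) \<le> T * (48 * e * L + 4 * exp 24 * L * Ex)"
    using SS T0 by (intro mult_left_mono) auto
  then have "T * (\<Sum>k\<in>I. S k) + 128 * (real K)\<^sup>2 \<le> T * L * (91 * e + 4 * exp 24 * Ex)"
    using KT by (simp add: algebra_simps)
  also have "\<dots> \<le> T * L * ((91 + 4 * exp 24) * (Ex + e))"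
  proof (intro mult_left_mono)
    show "91 * e + 4 * exp 24 * Ex \<le> (91 + 4 * exp 24) * (Ex + e)"
      using e0 Ex0 by (simp add: algebra_simps)
    show "0 \<le> T * L" using T0 L0 by simp
  qed
  finally have fin: "T * (\<Sum>k\<in>I. S k) + 128 * (real K)\<^sup>2 \<le> (91 + 4 * exp 24) * T * ln T * (exp (- e * ln T / ln P) + e)"
    by (simp add: Ex_def L_def algebra_simps)
  show ?thesis using intb fin by linarith
qed


theorem lemma3:
  shows "\<exists>C>0. \<exists>T0 P0. \<forall>T P \<epsilon> \<sigma> :: real.
    T \<ge> T0 \<and> P \<ge> P0 \<and> P \<le> sqrt T \<and>
    1 / ln T < \<epsilon> \<and> \<epsilon> < 1/10 \<and>
    1/2 - 1 / ln T \<le> \<sigma> \<and> \<sigma> \<le> 1/2 + 1 / ln T \<longrightarrow>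
    integral {T..2*T} (\<lambda>t. (cmod (
        (\<Sum>n\<in>{1..nat \<lfloor>sqrt (t / (2*pi))\<rfloor>}. 1 / (of_nat n powr Complex \<sigma> t))
      - (\<Sum>m\<in>{m. smooth P m \<and> real m \<le> T powr \<epsilon>}. 1 / (of_nat m powr Complex (1/2) t))
        * (\<Sum>n\<in>{n. rough P n \<and> real n \<le> T powr (1/2 - 2*\<epsilon>)}. 1 / (of_nat n powr Complex \<sigma> t))))\<^sup>2)
    \<le> C * T * ln T * (exp (- \<epsilon> * ln T / ln P) + \<epsilon>)"
    apply (rule exI[of _ "91 + 4 * exp (24::real)"])
  apply (rule conjI)
   apply (simp add: add_pos_pos)
  apply (rule exI[of _ "2::real"], rule exI[of _ "8::real"])
  apply (intro allI impI)
  apply (elim conjE)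
  apply (rule main_bound)
       apply assumption+
  done

end
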